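(* (i) For all $a,b\in\overline K$, $\omega_{a,-\infty}=\omega_{b,-\infty}=:\omega_{-\infty}$, and $\omega_{-\infty}\le\omega$ for every $\omega\in\mathbb V(\overline K)$. (ii) For every $a\in\overline K$, $\omega_{a,\infty^-}$ is a maximal element of $\mathbb V(\overline K)$, and the set of maximal elements of $\mathbb V(\overline K)$ is $\{\omega_{\mathcal B}\mid[\mathcal B]\in\mathbb B_\infty\}\sqcup\{\omega_{a,\infty^-}\mid a\in\overline K\}$. (iii) For every $a\in\overline K$, the interval $[\omega_{-\infty},\omega_{a,\infty^-}]$ in $\mathbb V(\overline K)$ equals $\{\omega_{a,\delta}\mid\delta\in\operatorname{Qcuts}(\Gamma)\}$.
   Context: $(K,v)$ valued field, $\overline K$ algebraic closure, $\bar v$ fixed extension of $v$ to $\overline K$, value group $\Gamma$. $\operatorname{Qcuts}(\Gamma)=\Gamma\sqcup\operatorname{Cuts}(\Gamma)$: quasi-cuts $(\delta^L,\delta^R)$ with $\delta^L\le\delta^R$, $\delta^L\cup\delta^R=\Gamma$ ($\gamma\in\Gamma\leftrightarrow(\Gamma_{\le\gamma},\Gamma_{\ge\gamma})$; cuts have $\delta^L<\delta^R$). Improper cuts: $-\infty=(\emptyset,\Gamma)$, $\infty^-=(\Gamma,\emptyset)$. For $\delta\in\Gamma$, $x_\delta=\delta$; for a cut $\delta$, $\Gamma(\delta)=x_\delta\mathbb Z\oplus\Gamma$ ordered with $\delta^L<x_\delta<\delta^R$; $\omega_{a,\delta}(\sum a_n(x-a)^n)=\min_n\{\bar v(a_n)+nx_\delta\}$.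 $\mathbb B_\infty$: classes, under mutual cofinality, of strictly decreasing nests $\mathcal B=(B_i)$ of closed balls $B(a_i,\gamma_i)=\{c:\bar v(c-a_i)\ge\gamma_i\}$, $\gamma_i\in\Gamma$, with empty intersection; $\omega_{\mathcal B}(f)=\max_i\omega_{a_i,\gamma_i}(f)$. $\mathbb V(\overline K)$: equivalence classes of valuations on $\overline K(x)$ extending $\bar v$, where $\mu\sim\nu$ if $\nu=\iota\circ\mu$ for an order isomorphism $\iota$ of value groups; ordered by $\mu\le\nu$ iff for all $f\in\overline K[x]$, $\mu(f)\le\nu(f)$, understood for inequivalent $\mu,\nu$ as the existence of $\gamma\in\Gamma$ with $\mu(f)\le\gamma\le\nu(f)$. *)

theory Defs
  imports "HOL-Computational_Algebra.Polynomial" "HOL-Computational_Algebra.Fraction_Field"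
begin

text \<open>The valuation vbar on an algebraically closed field 'k with values in an ordered
  abelian group 'g; vbar is only meaningful on nonzero elements (vbar 0 = infinity is
  never used).\<close>

definition alg_closed_field :: "'k::field itself \<Rightarrow> bool" where
  "alg_closed_field _ \<longleftrightarrow> (\<forall>p::'k poly. 0 < degree p \<longrightarrow> (\<exists>z. poly p z = 0))"

definition is_valuation :: "('k::field \<Rightarrow> 'g::linordered_ab_group_add) \<Rightarrow> bool" where
  "is_valuation v \<longleftrightarrow>
     (\<forall>c d. c \<noteq> 0 \<longrightarrow> d \<noteq> 0 \<longrightarrow> v (c * d) = v c + v d) \<and>
     (\<forall>c d. c \<noteq> 0 \<longrightarrow> d \<noteq> 0 \<longrightarrow> c + d \<noteq> 0 \<longrightarrow> min (v c) (v d) \<le> v (c + d))"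

definition valgroup :: "('k::field \<Rightarrow> 'g) \<Rightarrow> 'g set" where
  "valgroup v = v ` {c. c \<noteq> 0}"

primrec gmul :: "nat \<Rightarrow> 'g::ab_group_add \<Rightarrow> 'g" where
  "gmul 0 g = 0"
| "gmul (Suc n) g = g + gmul n g"

definition Qcuts :: "'g::linorder set \<Rightarrow> ('g set \<times> 'g set) set" where
  "Qcuts G = {(L, R). L \<union> R = G \<and> (\<forall>l\<in>L. \<forall>r\<in>R. l \<le> r)}"

definition qc_elem :: "'g::linorder set \<Rightarrow> 'g \<Rightarrow> 'g set \<times> 'g set" where
  "qc_elem G \<gamma> = ({x\<in>G. x \<le> \<gamma>}, {x\<in>G. \<gamma> \<le> x})"

definition qc_minf :: "'g set \<Rightarrow> 'g set \<times> 'g set" where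
  "qc_minf G = ({}, G)"

definition qc_inftym :: "'g set \<Rightarrow> 'g set \<times> 'g set" where
  "qc_inftym G = (G, {})"

text \<open>The ordered group Gamma(delta): an element n x_delta + beta is represented by
  (n, beta).  xle delta k beta expresses "k x_delta \<le> beta" (delta^L < x_delta < delta^R
  for a cut; x_delta = delta for delta in Gamma).\<close>
definition xle :: "'g::linordered_ab_group_add set \<times> 'g set \<Rightarrow> int \<Rightarrow> 'g \<Rightarrow> bool" where
  "xle \<delta> k \<beta> =
     (if k = 0 then 0 \<le> \<beta>
      else if 0 < k then (\<exists>r\<in>snd \<delta>. gmul (nat k) r \<le> \<beta>)
      else (\<exists>l\<in>fst \<delta>. - \<beta> \<le> gmul (nat (- k)) l))"

definition qle :: "'g::linordered_ab_group_add set \<times> 'g set \<Rightarrow> nat \<times> 'g \<Rightarrow> nat \<times> 'g \<Rightarrow> bool" where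
  "qle \<delta> s t = xle \<delta> (int (fst s) - int (fst t)) (snd t - snd s)"

definition padd :: "nat \<times> 'g::ab_group_add \<Rightarrow> nat \<times> 'g \<Rightarrow> nat \<times> 'g" where
  "padd s t = (fst s + fst t, snd s + snd t)"

definition tcoeff :: "'k::field \<Rightarrow> 'k poly \<Rightarrow> nat \<Rightarrow> 'k" where
  "tcoeff a f n = coeff (pcompose f [:a, 1:]) n"

definition terms :: "('k::field \<Rightarrow> 'g) \<Rightarrow> 'k \<Rightarrow> 'k poly \<Rightarrow> (nat \<times> 'g) set" where
  "terms v a f = {(n, v (tcoeff a f n)) | n. tcoeff a f n \<noteq> 0}"

definition omega_val :: "('k::field \<Rightarrow> 'g::linordered_ab_group_add) \<Rightarrow> 'k \<Rightarrow> 'g set \<times> 'g set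
    \<Rightarrow> 'k poly \<Rightarrow> nat \<times> 'g" where
  "omega_val v a \<delta> f = (SOME t. t \<in> terms v a f \<and> (\<forall>s\<in>terms v a f. qle \<delta> t s))"

text \<open>An element of V(Kbar) (an equivalence class of valuations mu on Kbar(x) extending vbar)
  is represented by the total preorder  P f g  \<longleftrightarrow>  mu(f) \<le> mu(g)  on Kbar(x)
  (with mu(0) = \<infinity>); two valuations are equivalent iff they induce the same preorder.\<close>

definition omega :: "('k::field \<Rightarrow> 'g::linordered_ab_group_add) \<Rightarrow> 'k \<Rightarrow> 'g set \<times> 'g set
    \<Rightarrow> 'k poly fract \<Rightarrow> 'k poly fract \<Rightarrow> bool" where
  "omega v a \<delta> x y \<longleftrightarrow> y = 0 \<or> (x \<noteq> 0 \<and> (\<exists>f1 g1 f2 g2. g1 \<noteq> 0 \<and> g2 \<noteq> 0 \<and>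
      x = Fract f1 g1 \<and> y = Fract f2 g2 \<and>
      qle \<delta> (padd (omega_val v a \<delta> f1) (omega_val v a \<delta> g2))
             (padd (omega_val v a \<delta> f2) (omega_val v a \<delta> g1))))"

definition cball :: "('k::field \<Rightarrow> 'g::linorder) \<Rightarrow> 'k \<Rightarrow> 'g \<Rightarrow> 'k set" where
  "cball v a \<gamma> = {c. c = a \<or> \<gamma> \<le> v (c - a)}"

text \<open>A strictly decreasing nest of closed balls B(a_i,gamma_i) (gamma_i \<in> Gamma) with empty
  intersection, given as its (self-indexed) set of (centre, radius) pairs.\<close>
definition is_nest :: "('k::field \<Rightarrow> 'g::linordered_ab_group_add) \<Rightarrow> ('k \<times> 'g) set \<Rightarrow> bool" where
  "is_nest v N \<longleftrightarrow> N \<noteq> {} \<and> (\<forall>(a, \<gamma>)\<in>N. \<gamma> \<in> valgroup v) \<and>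
     (\<forall>p\<in>N. \<forall>q\<in>N. p \<noteq> q \<longrightarrow>
        cball v (fst p) (snd p) \<subset> cball v (fst q) (snd q) \<or>
        cball v (fst q) (snd q) \<subset> cball v (fst p) (snd p)) \<and>
     (\<Inter>p\<in>N. cball v (fst p) (snd p)) = {}"

definition wval :: "('k::field \<Rightarrow> 'g::linordered_ab_group_add) \<Rightarrow> 'k \<Rightarrow> 'g \<Rightarrow> 'k poly \<Rightarrow> 'g" where
  "wval v a \<gamma> f = Min {v (tcoeff a f n) + gmul n \<gamma> | n. tcoeff a f n \<noteq> 0}"

definition wnest :: "('k::field \<Rightarrow> 'g::linordered_ab_group_add) \<Rightarrow> ('k \<times> 'g) set \<Rightarrow> 'k poly \<Rightarrow> 'g" where
  "wnest v N f = (GREATEST t. t \<in> {wval v a \<gamma> f | a \<gamma>. (a, \<gamma>) \<in> N})"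

definition omegaB :: "('k::field \<Rightarrow> 'g::linordered_ab_group_add) \<Rightarrow> ('k \<times> 'g) set
    \<Rightarrow> 'k poly fract \<Rightarrow> 'k poly fract \<Rightarrow> bool" where
  "omegaB v N x y \<longleftrightarrow> y = 0 \<or> (x \<noteq> 0 \<and> (\<exists>f1 g1 f2 g2. g1 \<noteq> 0 \<and> g2 \<noteq> 0 \<and>
      x = Fract f1 g1 \<and> y = Fract f2 g2 \<and>
      wnest v N f1 + wnest v N g2 \<le> wnest v N f2 + wnest v N g1))"

definition cst :: "'k::field \<Rightarrow> 'k poly fract" where
  "cst c = Fract [:c:] 1"

definition pfr :: "'k::field poly \<Rightarrow> 'k poly fract" where
  "pfr f = Fract f 1"

text \<open>P is the preorder f \<preceq> g :\<longleftrightarrow> mu(f) \<le> mu(g) of a valuation mu on Kbar(x)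
  extending vbar (value group any ordered abelian group containing Gamma).\<close>
definition is_val_class :: "('k::field \<Rightarrow> 'g::linordered_ab_group_add)
    \<Rightarrow> ('k poly fract \<Rightarrow> 'k poly fract \<Rightarrow> bool) \<Rightarrow> bool" where
  "is_val_class v P \<longleftrightarrow>
     (\<forall>x y. P x y \<or> P y x) \<and>
     (\<forall>x y z. P x y \<longrightarrow> P y z \<longrightarrow> P x z) \<and>
     (\<forall>x. P x 0) \<and> (\<forall>x. P 0 x \<longrightarrow> x = 0) \<and>
     (\<forall>x y z. P x y \<longrightarrow> P (x * z) (y * z)) \<and>
     (\<forall>x y z. P x y \<longrightarrow> P x z \<longrightarrow> P x (y + z)) \<and>
     (\<forall>c d. c \<noteq> 0 \<longrightarrow> d \<noteq> 0 \<longrightarrow> (P (cst c) (cst d) \<longleftrightarrow> v c \<le> v d))"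

definition vle :: "('k::field \<Rightarrow> 'g::linordered_ab_group_add)
    \<Rightarrow> ('k poly fract \<Rightarrow> 'k poly fract \<Rightarrow> bool) \<Rightarrow> ('k poly fract \<Rightarrow> 'k poly fract \<Rightarrow> bool) \<Rightarrow> bool" where
  "vle v P Q \<longleftrightarrow> P = Q \<or>
     (\<forall>f::'k poly. f \<noteq> 0 \<longrightarrow> (\<exists>c. c \<noteq> 0 \<and> P (pfr f) (cst c) \<and> Q (cst c) (pfr f)))"

definition is_maximal :: "('k::field \<Rightarrow> 'g::linordered_ab_group_add)
    \<Rightarrow> ('k poly fract \<Rightarrow> 'k poly fract \<Rightarrow> bool) \<Rightarrow> bool" where
  "is_maximal v P \<longleftrightarrow> is_val_class v P \<and> (\<forall>Q. is_val_class v Q \<longrightarrow> vle v P Q \<longrightarrow> Q = P)"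

end

theory Submission
  imports Defs
begin

lemma gmul_add_n: "gmul (m + n) g = gmul m g + gmul n g"
  by (induction m) (auto simp: add.assoc)
lemma gmul_add_g: "gmul n (a + b) = gmul n a + gmul n b"
  by (induction n) (auto simp: algebra_simps)
lemma gmul_zero[simp]: "gmul n 0 = 0"
  by (induction n) auto
lemma gmul_minus: "gmul n (- a) = - gmul n a"
  by (induction n) (auto simp: algebra_simps)
lemma gmul_diff: "gmul n (a - b) = gmul n a - gmul n b"
  using gmul_add_g[of n a "-b"] gmul_minus[of n b] by simp
lemma gmul_one[simp]: "gmul 1 g = g" by simp
lemma gmul_mono: "(a::'g::linordered_ab_group_add) \<le> b \<Longrightarrow> gmul n a \<le> gmul n b"
  by (induction n) (auto intro: add_mono)
lemma gmul_strict: "(a::'g::linordered_ab_group_add) < b \<Longrightarrow> n > 0 \<Longrightarrow> gmul n a < gmul n b"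
proof (induction n)
  case (Suc n) then show ?case
    by (cases "n = 0") (auto intro: add_less_le_mono less_imp_le gmul_mono)
qed auto
lemma gmul_le_iff: "n > 0 \<Longrightarrow> gmul n (a::'g::linordered_ab_group_add) \<le> gmul n b \<longleftrightarrow> a \<le> b"
  by (meson gmul_mono gmul_strict not_le)
lemma gmul_less_iff: "n > 0 \<Longrightarrow> gmul n (a::'g::linordered_ab_group_add) < gmul n b \<longleftrightarrow> a < b"
  by (meson gmul_mono gmul_strict not_le)
lemma gmul_nonneg: "0 \<le> (a::'g::linordered_ab_group_add) \<Longrightarrow> gmul n a \<ge> 0"
  using gmul_mono[of 0 a n] by simp
lemma gmul_ge_self: "0 \<le> (a::'g::linordered_ab_group_add) \<Longrightarrow> n > 0 \<Longrightarrow> a \<le> gmul n a"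
proof (induction n)
  case (Suc n) then show ?case using gmul_nonneg[of a n] by auto
qed auto
lemma gmul_mult: "gmul (m * n) g = gmul m (gmul n g)"
  by (induction m) (auto simp: gmul_add_n)

locale VF =
  fixes v :: "'k::field \<Rightarrow> 'g::linordered_ab_group_add"
  assumes ac: "alg_closed_field TYPE('k)" and val: "is_valuation v"
begin

abbreviation "G \<equiv> valgroup v"

lemma vmult: "c \<noteq> 0 \<Longrightarrow> d \<noteq> 0 \<Longrightarrow> v (c * d) = v c + v d"
  using val unfolding is_valuation_def by blast
lemma vultra: "c \<noteq> 0 \<Longrightarrow> d \<noteq> 0 \<Longrightarrow> c + d \<noteq> 0 \<Longrightarrow> min (v c) (v d) \<le> v (c + d)"
  using val unfolding is_valuation_def by blast
lemma v1[simp]: "v 1 = 0"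
  using vmult[of 1 1] by simp
lemma vm1: "v (-1) = 0"
proof -
  have "v (-1) + v (-1) = 0" using vmult[of "-1" "-1"] by simp
  then show ?thesis
    by (metis add.inverse_unique add_less_same_cancel1 add_pos_pos
        less_eq_neg_nonpos linorder_not_le neg_less_0_iff_less not_less_iff_gr_or_eq)
qed
lemma vneg[simp]: "v (- c) = v c"
proof (cases "c = 0")
  case False
  then show ?thesis using vmult[of "-1" c] vm1 by simp
qed simp
lemma vsub: "v (c - d) = v (d - c)"
  by (metis minus_diff_eq vneg)
lemma vinv: "c \<noteq> 0 \<Longrightarrow> v (inverse c) = - v c"
  using vmult[of c "inverse c"] by (simp add: eq_neg_iff_add_eq_0 add.commute)
lemma vdiv: "c \<noteq> 0 \<Longrightarrow> d \<noteq> 0 \<Longrightarrow> v (c / d) = v c - v d"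
  by (simp add: divide_inverse vmult vinv)
lemma vpow: "c \<noteq> 0 \<Longrightarrow> v (c ^ n) = gmul n (v c)"
  by (induction n) (auto simp: vmult)
lemma vultra': "c \<noteq> 0 \<Longrightarrow> d \<noteq> 0 \<Longrightarrow> c + d \<noteq> 0 \<Longrightarrow> \<gamma> \<le> v c \<Longrightarrow> \<gamma> \<le> v d \<Longrightarrow> \<gamma> \<le> v (c + d)"
  using vultra[of c d] by (metis min.bounded_iff order_trans)
lemma vstrict: assumes "c \<noteq> 0" "d \<noteq> 0" "v c < v d" shows "c + d \<noteq> 0" "v (c + d) = v c"
proof -
  show cd: "c + d \<noteq> 0" using assms by (metis add_eq_0_iff vneg less_irrefl)
  have "min (v (c + d)) (v (-d)) \<le> v ((c + d) + (-d))"
    using vultra[of "c+d" "-d"] cd assms by simp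
  then have "v (c + d) \<le> v c" using assms by (auto simp: min_def split: if_splits)
  moreover have "v c \<le> v (c + d)" using vultra[of c d] cd assms by auto
  ultimately show "v (c + d) = v c" by simp
qed
lemma vstrict': "c \<noteq> 0 \<Longrightarrow> d \<noteq> 0 \<Longrightarrow> v d < v c \<Longrightarrow> c + d \<noteq> 0 \<and> v (c + d) = v d"
  using vstrict[of d c] by (simp add: add.commute)

lemma G_0: "0 \<in> G" unfolding valgroup_def by (rule image_eqI[of _ _ 1]) auto
lemma G_v: "c \<noteq> 0 \<Longrightarrow> v c \<in> G" unfolding valgroup_def by auto
lemma G_E: "\<gamma> \<in> G \<Longrightarrow> (\<And>c. c \<noteq> 0 \<Longrightarrow> \<gamma> = v c \<Longrightarrow> P) \<Longrightarrow> P"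
  unfolding valgroup_def by auto
lemma G_add: "a \<in> G \<Longrightarrow> b \<in> G \<Longrightarrow> a + b \<in> G"
  by (metis G_E G_v vmult mult_eq_0_iff)
lemma G_minus: "a \<in> G \<Longrightarrow> - a \<in> G"
  by (metis G_E G_v vinv inverse_nonzero_iff_nonzero)
lemma G_diff: "a \<in> G \<Longrightarrow> b \<in> G \<Longrightarrow> a - b \<in> G"
  using G_add G_minus by (metis diff_conv_add_uminus)
lemma G_gmul: "a \<in> G \<Longrightarrow> gmul n a \<in> G"
  by (induction n) (auto simp: G_0 G_add)

lemma root_exists: "0 < degree (p::'k poly) \<Longrightarrow> \<exists>z. poly p z = 0"
  using ac unfolding alg_closed_field_def by blast

lemma nth_root: fixes c :: 'k assumes "c \<noteq> 0" "n > 0" shows "\<exists>z. z \<noteq> 0 \<and> z ^ n = c"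
proof -
  let ?p = "monom 1 n + [:-c:]"
  have "degree ?p = n" using assms by (subst degree_add_eq_left) (auto simp: degree_monom_eq)
  then obtain z where "poly ?p z = 0" using root_exists[of ?p] assms by auto
  then have "z ^ n = c" by (simp add: poly_monom)
  then show ?thesis using assms by auto
qed

lemma G_div: assumes "\<beta> \<in> G" "n > 0" shows "\<exists>q\<in>G. gmul n q = \<beta>"
proof -
  obtain c where c: "c \<noteq> 0" "\<beta> = v c" using assms G_E by blast
  obtain z where "z \<noteq> 0" "z ^ n = c" using nth_root c assms by blast
  then show ?thesis using c vpow[of z n] G_v by auto
qed

lemma split_induct:
  fixes P :: "'k poly \<Rightarrow> bool"
  assumes const: "\<And>c. c \<noteq> 0 \<Longrightarrow> P [:c:]"
    and lin: "\<And>r. P [:-r, 1:]"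
    and mult: "\<And>p q. p \<noteq> 0 \<Longrightarrow> q \<noteq> 0 \<Longrightarrow> P p \<Longrightarrow> P q \<Longrightarrow> P (p * q)"
    and "p \<noteq> 0"
  shows "P p"
  using \<open>p \<noteq> 0\<close>
proof (induction "degree p" arbitrary: p rule: less_induct)
  case less
  show ?case
  proof (cases "degree p = 0")
    case True
    then obtain c where "p = [:c:]" by (meson degree_eq_zeroE)
    then show ?thesis using less const by auto
  next
    case False
    then obtain z where "poly p z = 0" using root_exists by auto
    then obtain q where q: "p = [:-z, 1:] * q" using poly_eq_0_iff_dvd by (metis dvdE)
    have "q \<noteq> 0" using q less by auto
    have "degree p = 1 + degree q" unfolding q using \<open>q \<noteq> 0\<close>
      by (subst degree_mult_eq) auto
    then have "P q" using less \<open>q \<noteq> 0\<close> by auto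
    then show ?thesis using mult[OF _ \<open>q \<noteq> 0\<close> lin[of z]] \<open>q \<noteq> 0\<close> unfolding q by simp
  qed
qed

end

lemma Qcuts_le: "\<delta> \<in> Qcuts G \<Longrightarrow> l \<in> fst \<delta> \<Longrightarrow> r \<in> snd \<delta> \<Longrightarrow> l \<le> r"
  unfolding Qcuts_def by auto
lemma Qcuts_un: "\<delta> \<in> Qcuts G \<Longrightarrow> fst \<delta> \<union> snd \<delta> = G"
  unfolding Qcuts_def by auto

lemma xle_pos: "k > 0 \<Longrightarrow> xle \<delta> k \<beta> \<longleftrightarrow> (\<exists>r\<in>snd \<delta>. gmul (nat k) r \<le> \<beta>)"
  unfolding xle_def by auto
lemma xle_neg: "k < 0 \<Longrightarrow> xle \<delta> k \<beta> \<longleftrightarrow> (\<exists>l\<in>fst \<delta>. - \<beta> \<le> gmul (nat (- k)) l)"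
  unfolding xle_def by auto
lemma xle_zero: "xle \<delta> 0 \<beta> \<longleftrightarrow> 0 \<le> \<beta>"
  unfolding xle_def by auto

lemma xle_mono: assumes a: "xle \<delta> k \<beta>" "\<beta> \<le> \<beta>'" shows "xle \<delta> k \<beta>'"
proof -
  have b: "- \<beta>' \<le> - \<beta>" using a(2) by simp
  consider "k = 0" | "k > 0" | "k < 0" by linarith
  then show ?thesis
  proof cases
    case 1 then show ?thesis using a by (simp add: xle_zero)
  next
    case 2
    then obtain r where "r \<in> snd \<delta>" "gmul (nat k) r \<le> \<beta>" using a xle_pos by blast
    then show ?thesis using 2 a(2) xle_pos by (meson order_trans)
  next
    case 3
    then obtain l where "l \<in> fst \<delta>" "- \<beta> \<le> gmul (nat (-k)) l" using a xle_neg by blast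
    then show ?thesis using 3 b xle_neg by (meson order_trans)
  qed
qed

lemma xle_pp: "xle \<delta> (int a) \<beta> \<Longrightarrow> xle \<delta> (int b) \<gamma> \<Longrightarrow> a > 0 \<Longrightarrow> b > 0 \<Longrightarrow>
   xle \<delta> (int a + int b) (\<beta> + \<gamma>)"
proof -
  assume as: "xle \<delta> (int a) \<beta>" "xle \<delta> (int b) \<gamma>" "a > 0" "b > 0"
  obtain r where r: "r \<in> snd \<delta>" "gmul a r \<le> \<beta>" using as(1,3) xle_pos[of "int a" \<delta> \<beta>] by auto
  obtain r' where r': "r' \<in> snd \<delta>" "gmul b r' \<le> \<gamma>" using as(2,4) xle_pos[of "int b" \<delta> \<gamma>] by auto
  define r0 where "r0 = min r r'"
  have r0: "r0 \<in> snd \<delta>" using r r' unfolding r0_def by (cases "r \<le> r'") (auto simp: min_def)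
  have "gmul a r0 \<le> \<beta>" using gmul_mono[of r0 r a] r unfolding r0_def by auto
  moreover have "gmul b r0 \<le> \<gamma>" using gmul_mono[of r0 r' b] r' unfolding r0_def by auto
  ultimately have "gmul (a + b) r0 \<le> \<beta> + \<gamma>" unfolding gmul_add_n by (rule add_mono)
  moreover have e: "int a + int b = int (a + b)" by simp
  ultimately show ?thesis unfolding e using r0 as(3) xle_pos[of "int (a+b)" \<delta> "\<beta> + \<gamma>"]
    by (simp del: of_nat_add) blast
qed

lemma xle_nn: "xle \<delta> (- int a) \<beta> \<Longrightarrow> xle \<delta> (- int b) \<gamma> \<Longrightarrow> a > 0 \<Longrightarrow> b > 0 \<Longrightarrow>
   xle \<delta> (- int a + - int b) (\<beta> + \<gamma>)"
proof -
  assume as: "xle \<delta> (- int a) \<beta>" "xle \<delta> (- int b) \<gamma>" "a > 0" "b > 0"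
  obtain l where l: "l \<in> fst \<delta>" "-\<beta> \<le> gmul a l" using as(1,3) xle_neg[of "- int a" \<delta> \<beta>] by auto
  obtain l' where l': "l' \<in> fst \<delta>" "-\<gamma> \<le> gmul b l'" using as(2,4) xle_neg[of "- int b" \<delta> \<gamma>] by auto
  define l0 where "l0 = max l l'"
  have l0: "l0 \<in> fst \<delta>" using l l' unfolding l0_def by (cases "l \<le> l'") (auto simp: max_def)
  have "-\<beta> \<le> gmul a l0" using gmul_mono[of l l0 a] l unfolding l0_def by auto
  moreover have "-\<gamma> \<le> gmul b l0" using gmul_mono[of l' l0 b] l' unfolding l0_def by auto
  ultimately have "-\<beta> + -\<gamma> \<le> gmul (a + b) l0" unfolding gmul_add_n by (rule add_mono)
  then have "- (\<beta> + \<gamma>) \<le> gmul (a + b) l0" by (simp add: add.commute)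
  moreover have e: "- int a + - int b = - int (a + b)" by simp
  ultimately show ?thesis unfolding e using l0 as(3) xle_neg[of "- int (a+b)" \<delta> "\<beta> + \<gamma>"]
    by (simp del: of_nat_add) blast
qed

lemma xle_pn: assumes "\<delta> \<in> Qcuts G" "xle \<delta> (int a) \<beta>" "xle \<delta> (- int b) \<gamma>" "a > 0" "b > 0"
  shows "xle \<delta> (int a - int b) (\<beta> + \<gamma>)"
proof -
  obtain r l where rl: "r \<in> snd \<delta>" "gmul a r \<le> \<beta>" "l \<in> fst \<delta>" "-\<gamma> \<le> gmul b l"
    using assms by (auto simp: xle_pos xle_neg)
  have lr: "l \<le> r" using Qcuts_le[OF assms(1) rl(3,1)] .
  have "- gmul b l \<le> \<gamma>" using rl(4) by (simp add: minus_le_iff)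
  then have key: "gmul a r - gmul b l \<le> \<beta> + \<gamma>" using add_mono[OF rl(2)] by (simp only: diff_conv_add_uminus)
  consider "a > b" | "a < b" | "a = b" by linarith
  then show ?thesis
  proof cases
    case 1
    then obtain c where c: "a = c + b" "c > 0" by (metis add.commute less_imp_add_positive)
    have "gmul c r = gmul a r - gmul b r" using c by (simp add: gmul_add_n)
    also have "\<dots> \<le> gmul a r - gmul b l" using gmul_mono[OF lr] by simp
    finally have "gmul c r \<le> \<beta> + \<gamma>" using key by simp
    then show ?thesis using c rl by (subst xle_pos) auto
  next
    case 2
    then obtain c where c: "b = c + a" "c > 0" by (metis add.commute less_imp_add_positive)
    have "- (\<beta> + \<gamma>) \<le> gmul b l - gmul a r" using key by (simp add: algebra_simps)
    also have "\<dots> \<le> gmul b l - gmul a l" using gmul_mono[OF lr] by simp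
    also have "\<dots> = gmul c l" using c by (simp add: gmul_add_n)
    finally show ?thesis using c rl by (subst xle_neg) auto
  next
    case 3
    then have "0 \<le> \<beta> + \<gamma>" using key gmul_mono[OF lr, of a]
      by (metis diff_ge_0_iff_ge order_trans)
    then show ?thesis using 3 by (simp add: xle_zero)
  qed
qed

lemma xle_add: assumes "\<delta> \<in> Qcuts G" "xle \<delta> k \<beta>" "xle \<delta> m \<gamma>"
  shows "xle \<delta> (k + m) (\<beta> + \<gamma>)"
proof -
  have zero: "xle \<delta> m (\<beta> + \<gamma>)" if "xle \<delta> 0 \<beta>" "xle \<delta> m \<gamma>" for \<beta> \<gamma> m
    using that by (auto simp: xle_zero intro: xle_mono)
  consider "k = 0" | "m = 0" | "k > 0" "m > 0" | "k > 0" "m < 0" | "k < 0" "m > 0" | "k < 0" "m < 0"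
    by linarith
  then show ?thesis
  proof cases
    case 1 then show ?thesis using zero assms by simp
  next
    case 2 then show ?thesis using zero[of \<gamma> k \<beta>] assms by (simp add: add.commute)
  next
    case 3
    then obtain a b where "k = int a" "m = int b" "a > 0" "b > 0" by (metis pos_int_cases)
    then show ?thesis using xle_pp assms by blast
  next
    case 4
    then obtain a b where "k = int a" "m = - int b" "a > 0" "b > 0"
      by (metis pos_int_cases neg_int_cases)
    then show ?thesis using xle_pn[where a=a and b=b and \<beta>=\<beta> and \<gamma>=\<gamma>] assms by simp
  next
    case 5
    then obtain a b where "k = - int a" "m = int b" "a > 0" "b > 0"
      by (metis pos_int_cases neg_int_cases)
    then show ?thesis using xle_pn[where a=b and b=a and \<beta>=\<gamma> and \<gamma>=\<beta>] assms by (simp add: add.commute)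
  next
    case 6
    then obtain a b where "k = - int a" "m = - int b" "a > 0" "b > 0" by (metis neg_int_cases)
    then show ?thesis using xle_nn assms by blast
  qed
qed

context VF begin

lemma xle_total: assumes "\<delta> \<in> Qcuts G" "\<beta> \<in> G" shows "xle \<delta> k \<beta> \<or> xle \<delta> (-k) (-\<beta>)"
proof -
  consider "k = 0" | "k > 0" | "k < 0" by linarith
  then show ?thesis
  proof cases
    case 1 then show ?thesis by (auto simp: xle_zero)
  next
    case 2
    then obtain a where a: "k = int a" "a > 0" by (metis pos_int_cases)
    obtain q where q: "q \<in> G" "gmul a q = \<beta>" using G_div assms a by blast
    then have "q \<in> fst \<delta> \<or> q \<in> snd \<delta>" using Qcuts_un[OF assms(1)] by auto
    then show ?thesis using a q by (auto simp: xle_pos xle_neg)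
  next
    case 3
    then obtain a where a: "k = - int a" "a > 0" by (metis neg_int_cases)
    obtain q where q: "q \<in> G" "gmul a q = - \<beta>" using G_div G_minus assms a by blast
    then have "q \<in> fst \<delta> \<or> q \<in> snd \<delta>" using Qcuts_un[OF assms(1)] by auto
    then show ?thesis
    proof
      assume "q \<in> fst \<delta>" then have "xle \<delta> k \<beta>" using a q by (subst xle_neg) (auto intro!: bexI[of _ q])
      then show ?thesis ..
    next
      assume "q \<in> snd \<delta>" then have "xle \<delta> (-k) (-\<beta>)" using a q by (subst xle_pos) (auto intro!: bexI[of _ q])
      then show ?thesis ..
    qed
  qed
qed

end

lemma qle_refl: "qle \<delta> s s" unfolding qle_def by (simp add: xle_zero)
lemma qle_trans: "\<delta> \<in> Qcuts G \<Longrightarrow> qle \<delta> s t \<Longrightarrow> qle \<delta> t u \<Longrightarrow> qle \<delta> s u"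
  unfolding qle_def using xle_add by fastforce
lemma qle_padd: "qle \<delta> (padd s u) (padd t u) = qle \<delta> s t"
  unfolding qle_def padd_def by (simp add: algebra_simps)
lemma qle_padd': "qle \<delta> (padd u s) (padd u t) = qle \<delta> s t"
  unfolding qle_def padd_def by (simp add: algebra_simps)
lemma qle_same: "fst s = fst t \<Longrightarrow> qle \<delta> s t \<longleftrightarrow> snd s \<le> snd t"
  unfolding qle_def by (simp add: xle_zero)
lemma padd_comm: "padd s t = padd t s" unfolding padd_def by (simp add: add.commute)
lemma padd_assoc: "padd (padd s t) u = padd s (padd t u)" unfolding padd_def by (simp add: add.assoc)

lemma (in VF) qle_total: "\<delta> \<in> Qcuts G \<Longrightarrow> snd s \<in> G \<Longrightarrow> snd t \<in> G \<Longrightarrow> qle \<delta> s t \<or> qle \<delta> t s"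
  unfolding qle_def using xle_total[of \<delta> "snd t - snd s" "int (fst s) - int (fst t)"] G_diff
  by (auto simp: algebra_simps)

lemma qle_padd_mono: "\<delta> \<in> Qcuts G \<Longrightarrow> qle \<delta> s t \<Longrightarrow> qle \<delta> s' t' \<Longrightarrow> qle \<delta> (padd s s') (padd t t')"
  by (meson qle_padd qle_padd' qle_trans)

definition qlt where "qlt \<delta> s t \<longleftrightarrow> \<not> qle \<delta> t s"
definition qeq where "qeq \<delta> s t \<longleftrightarrow> qle \<delta> s t \<and> qle \<delta> t s"

lemma qlt_padd_mono: assumes "\<delta> \<in> Qcuts G" "qlt \<delta> s t" "qle \<delta> s' t'"
  shows "qlt \<delta> (padd s s') (padd t t')"
proof -
  have "\<not> qle \<delta> (padd t t') (padd s s')"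
  proof
    assume h: "qle \<delta> (padd t t') (padd s s')"
    have "qle \<delta> (padd t s') (padd t t')" using assms(3) qle_padd' by blast
    then have "qle \<delta> (padd t s') (padd s s')" using h qle_trans assms(1) by blast
    then have "qle \<delta> t s" using qle_padd by blast
    then show False using assms(2) unfolding qlt_def by blast
  qed
  then show ?thesis unfolding qlt_def .
qed

context VF begin

definition T :: "'k poly \<Rightarrow> (nat \<times> 'g) set" where
  "T p = {(n, v (coeff p n)) | n. coeff p n \<noteq> 0}"

lemma terms_T: "terms v a f = T (pcompose f [:a, 1:])"
  unfolding terms_def T_def tcoeff_def by simp

lemma T_finite: "finite (T p)"
proof -
  have "T p \<subseteq> (\<lambda>n. (n, v (coeff p n))) ` {..degree p}"
    unfolding T_def using le_degree by auto
  then show ?thesis using finite_subset by blast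
qed
lemma T_ne: "p \<noteq> 0 \<Longrightarrow> T p \<noteq> {}"
  unfolding T_def using leading_coeff_neq_0 by blast
lemma T_G: "s \<in> T p \<Longrightarrow> snd s \<in> G"
  unfolding T_def using G_v by auto
lemma T_mem: "coeff p n \<noteq> 0 \<Longrightarrow> (n, v (coeff p n)) \<in> T p"
  unfolding T_def by auto

lemma min_exists: assumes "\<delta> \<in> Qcuts G" "finite S" "S \<noteq> {}" "\<forall>s\<in>S. snd s \<in> G"
  shows "\<exists>t\<in>S. \<forall>s\<in>S. qle \<delta> t s"
  using assms(2,3,4)
proof (induction S rule: finite_ne_induct)
  case (singleton x) then show ?case using qle_refl[of \<delta> x] by auto
next
  case (insert x F)
  then obtain t where t: "t \<in> F" "\<forall>s\<in>F. qle \<delta> t s" by auto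
  have "qle \<delta> t x \<or> qle \<delta> x t" using qle_total[OF assms(1)] insert t by auto
  then show ?case
  proof
    assume "qle \<delta> t x" then show ?thesis using t by auto
  next
    assume "qle \<delta> x t" then show ?thesis using t qle_trans[OF assms(1)] qle_refl by blast
  qed
qed

lemma least_min: assumes "\<delta> \<in> Qcuts G" "p \<noteq> 0"
  shows "\<exists>i. coeff p i \<noteq> 0 \<and> (\<forall>s\<in>T p. qle \<delta> (i, v (coeff p i)) s) \<and>
     (\<forall>j<i. coeff p j \<noteq> 0 \<longrightarrow> qlt \<delta> (i, v (coeff p i)) (j, v (coeff p j)))"
proof -
  obtain t where t: "t \<in> T p" "\<forall>s\<in>T p. qle \<delta> t s"
    using min_exists[OF assms(1) T_finite T_ne[OF assms(2)]] T_G by blast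
  let ?P = "\<lambda>i. coeff p i \<noteq> 0 \<and> (\<forall>s\<in>T p. qle \<delta> (i, v (coeff p i)) s)"
  have "\<exists>i. ?P i" using t unfolding T_def by auto
  then have P: "?P (LEAST i. ?P i)" by (rule LeastI_ex)
  moreover have "qlt \<delta> ((LEAST i. ?P i), v (coeff p (LEAST i. ?P i))) (j, v (coeff p j))"
    if "j < (LEAST i. ?P i)" "coeff p j \<noteq> 0" for j
  proof (rule ccontr)
    assume "\<not> ?thesis"
    then have q: "qle \<delta> (j, v (coeff p j)) ((LEAST i. ?P i), v (coeff p (LEAST i. ?P i)))"
      unfolding qlt_def by simp
    have "?P j" using that P qle_trans[OF assms(1) q] by blast
    then show False using not_less_Least that(1) by blast
  qed
  ultimately show ?thesis by blast
qed

lemma vsum_ge: "finite I \<Longrightarrow> (\<Sum>i\<in>I. x i) \<noteq> 0 \<Longrightarrow> (\<forall>i\<in>I. x i \<noteq> 0 \<longrightarrow> \<gamma> \<le> v (x i)) \<Longrightarrow>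
   \<gamma> \<le> v (\<Sum>i\<in>I. x i)"
proof (induction I rule: finite_induct)
  case (insert j I)
  show ?case
  proof (cases "x j = 0")
    case True then show ?thesis using insert by simp
  next
    case False
    show ?thesis
    proof (cases "(\<Sum>i\<in>I. x i) = 0")
      case True then show ?thesis using insert False by simp
    next
      case F2: False
      then show ?thesis using insert False vultra'[of "x j" "\<Sum>i\<in>I. x i" \<gamma>] by simp
    qed
  qed
qed simp

lemma vsum_gt: "finite I \<Longrightarrow> (\<Sum>i\<in>I. x i) \<noteq> 0 \<Longrightarrow> (\<forall>i\<in>I. x i \<noteq> 0 \<longrightarrow> \<gamma> < v (x i)) \<Longrightarrow>
   \<gamma> < v (\<Sum>i\<in>I. x i)"
proof (induction I rule: finite_induct)
  case (insert j I)
  show ?case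
  proof (cases "x j = 0")
    case True then show ?thesis using insert by simp
  next
    case False
    show ?thesis
    proof (cases "(\<Sum>i\<in>I. x i) = 0")
      case True then show ?thesis using insert False by simp
    next
      case F2: False
      have "min (v (x j)) (v (\<Sum>i\<in>I. x i)) \<le> v (x j + (\<Sum>i\<in>I. x i))"
        using vultra[of "x j" "\<Sum>i\<in>I. x i"] insert False F2 by simp
      then show ?thesis using insert False F2 by (simp add: min_def split: if_splits)
    qed
  qed
qed simp

lemma vsum_strict: assumes "finite I" "j \<in> I" "x j \<noteq> 0"
  "\<forall>i\<in>I - {j}. x i \<noteq> 0 \<longrightarrow> v (x j) < v (x i)"
  shows "(\<Sum>i\<in>I. x i) \<noteq> 0 \<and> v (\<Sum>i\<in>I. x i) = v (x j)"
proof -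
  have s: "(\<Sum>i\<in>I. x i) = x j + (\<Sum>i\<in>I - {j}. x i)"
    using assms by (simp add: sum.remove)
  show ?thesis
  proof (cases "(\<Sum>i\<in>I - {j}. x i) = 0")
    case True then show ?thesis using s assms by simp
  next
    case False
    have "v (x j) < v (\<Sum>i\<in>I - {j}. x i)"
      using vsum_gt[of "I - {j}" x] False assms by auto
    then show ?thesis using vstrict[OF assms(3) False] s by simp
  qed
qed

lemma gauss_mult:
  assumes d: "\<delta> \<in> Qcuts G" and p: "p \<noteq> 0" and q: "q \<noteq> 0"
    and tp: "tp \<in> T p" "\<forall>s\<in>T p. qle \<delta> tp s"
    and tq: "tq \<in> T q" "\<forall>s\<in>T q. qle \<delta> tq s"
  shows "\<exists>t\<in>T (p * q). qeq \<delta> t (padd tp tq) \<and> (\<forall>s\<in>T (p * q). qle \<delta> t s)"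
proof -
  obtain i0 where i0: "coeff p i0 \<noteq> 0" "\<forall>s\<in>T p. qle \<delta> (i0, v (coeff p i0)) s"
     "\<forall>j<i0. coeff p j \<noteq> 0 \<longrightarrow> qlt \<delta> (i0, v (coeff p i0)) (j, v (coeff p j))"
    using least_min[OF d p] by blast
  obtain j0 where j0: "coeff q j0 \<noteq> 0" "\<forall>s\<in>T q. qle \<delta> (j0, v (coeff q j0)) s"
     "\<forall>j<j0. coeff q j \<noteq> 0 \<longrightarrow> qlt \<delta> (j0, v (coeff q j0)) (j, v (coeff q j))"
    using least_min[OF d q] by blast
  let ?a = "coeff p" and ?b = "coeff q"
  let ?t0 = "padd (i0, v (?a i0)) (j0, v (?b j0))"
  have eqp: "qeq \<delta> (i0, v (?a i0)) tp"
    unfolding qeq_def using i0 tp T_mem[OF i0(1)] by blast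
  have eqq: "qeq \<delta> (j0, v (?b j0)) tq"
    unfolding qeq_def using j0 tq T_mem[OF j0(1)] by blast
  define n0 where "n0 = i0 + j0"
  define x where "x i = ?a i * ?b (n0 - i)" for i
  have c: "coeff (p * q) n0 = (\<Sum>i\<le>n0. x i)" unfolding coeff_mult x_def ..
  have strict: "v (x i0) < v (x i)" if "i \<le> n0" "i \<noteq> i0" "x i \<noteq> 0" for i
  proof -
    have ai: "?a i \<noteq> 0" and bi: "?b (n0 - i) \<noteq> 0" using that(3) unfolding x_def by auto
    have "qlt \<delta> ?t0 (padd (i, v (?a i)) (n0 - i, v (?b (n0 - i))))"
    proof (cases "i < i0")
      case True
      have "qlt \<delta> (i0, v (?a i0)) (i, v (?a i))" using i0(3) True ai by blast
      moreover have "qle \<delta> (j0, v (?b j0)) (n0 - i, v (?b (n0 - i)))" using j0(2) T_mem[OF bi] by blast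
      ultimately show ?thesis using qlt_padd_mono[OF d] by blast
    next
      case False
      then have "n0 - i < j0" using that unfolding n0_def by auto
      then have "qlt \<delta> (j0, v (?b j0)) (n0 - i, v (?b (n0 - i)))" using j0(3) bi by blast
      moreover have "qle \<delta> (i0, v (?a i0)) (i, v (?a i))" using i0(2) T_mem[OF ai] by blast
      ultimately have "qlt \<delta> (padd (j0, v (?b j0)) (i0, v (?a i0))) (padd (n0 - i, v (?b (n0 - i))) (i, v (?a i)))"
        using qlt_padd_mono[OF d] by blast
      then show ?thesis by (simp add: padd_comm)
    qed
    moreover have "fst ?t0 = fst (padd (i, v (?a i)) (n0 - i, v (?b (n0 - i))))"
      using that unfolding padd_def n0_def by auto
    ultimately have "v (?a i0) + v (?b j0) < v (?a i) + v (?b (n0 - i))"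
      unfolding qlt_def by (simp add: qle_same padd_def)
    then show ?thesis using ai bi i0 j0 unfolding x_def n0_def by (simp add: vmult)
  qed
  have "x i0 \<noteq> 0" unfolding x_def n0_def using i0 j0 by simp
  then have cs: "coeff (p * q) n0 \<noteq> 0 \<and> v (coeff (p * q) n0) = v (x i0)"
    unfolding c using vsum_strict[of "{..n0}" i0 x] strict unfolding n0_def by auto
  then have t0: "(n0, v (coeff (p * q) n0)) = ?t0"
    unfolding padd_def n0_def x_def using i0 j0 by (simp add: vmult)
  have t0T: "?t0 \<in> T (p * q)" using T_mem[of "p*q" n0] cs t0 by simp
  have t0min: "qle \<delta> ?t0 s" if sT: "s \<in> T (p * q)" for s
  proof -
    obtain n where n: "s = (n, v (coeff (p * q) n))" "coeff (p * q) n \<noteq> 0"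
      using sT unfolding T_def by blast
    define y where "y i = ?a i * ?b (n - i)" for i
    have cn: "coeff (p * q) n = (\<Sum>i\<le>n. y i)" unfolding coeff_mult y_def ..
    let ?S = "{v (y i) | i. i \<le> n \<and> y i \<noteq> 0}"
    have "?S \<noteq> {}"
    proof
      assume "?S = {}"
      then have "\<forall>i\<in>{..n}. y i = 0" by auto
      then have "(\<Sum>i\<le>n. y i) = 0" by simp
      then show False using n(2) cn by simp
    qed
    moreover have "finite ?S" by simp
    ultimately have "Min ?S \<in> ?S" using Min_in by blast
    then obtain i where i: "i \<le> n" "y i \<noteq> 0" "Min ?S = v (y i)" by auto
    have "v (y i) \<le> v (coeff (p * q) n)"
    proof -
      have "\<forall>j\<in>{..n}. y j \<noteq> 0 \<longrightarrow> v (y i) \<le> v (y j)"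
      proof (intro ballI impI)
        fix j assume "j \<in> {..n}" "y j \<noteq> 0"
        then have "v (y j) \<in> ?S" by auto
        then have "Min ?S \<le> v (y j)" using Min_le[OF \<open>finite ?S\<close>] by blast
        then show "v (y i) \<le> v (y j)" using i(3) by simp
      qed
      then show ?thesis using vsum_ge[of "{..n}" y "v (y i)"] n(2) unfolding cn by blast
    qed
    then have "qle \<delta> (n, v (y i)) s" using n by (simp add: qle_same)
    moreover have "qle \<delta> ?t0 (n, v (y i))"
    proof -
      have ai: "?a i \<noteq> 0" and bi: "?b (n - i) \<noteq> 0" using i unfolding y_def by auto
      have "qle \<delta> ?t0 (padd (i, v (?a i)) (n - i, v (?b (n - i))))"
        using qle_padd_mono[OF d] i0(2) j0(2) T_mem[OF ai] T_mem[OF bi] by blast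
      then show ?thesis using i ai bi unfolding padd_def y_def by (simp add: vmult)
    qed
    ultimately show ?thesis using qle_trans[OF d] by blast
  qed
  have "qeq \<delta> ?t0 (padd tp tq)"
    using eqp eqq qle_padd_mono[OF d] unfolding qeq_def by blast
  then show ?thesis using t0T t0min by blast
qed

lemma gauss_add:
  assumes d: "\<delta> \<in> Qcuts G"
    and tp: "\<forall>s\<in>T p. qle \<delta> tp s" and tq: "\<forall>s\<in>T q. qle \<delta> tq s"
    and s: "s \<in> T (p + q)"
  shows "qle \<delta> tp s \<or> qle \<delta> tq s"
proof -
  obtain n where n: "s = (n, v (coeff p n + coeff q n))" "coeff p n + coeff q n \<noteq> 0"
    using s unfolding T_def by auto
  show ?thesis
  proof (cases "coeff p n = 0")
    case True then show ?thesis using n tq T_mem[of q n] by auto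
  next
    case a: False
    show ?thesis
    proof (cases "coeff q n = 0")
      case True then show ?thesis using n tp T_mem[of p n] by auto
    next
      case b: False
      have "min (v (coeff p n)) (v (coeff q n)) \<le> v (coeff p n + coeff q n)"
        using vultra a b n by blast
      then have "v (coeff p n) \<le> v (coeff p n + coeff q n) \<or> v (coeff q n) \<le> v (coeff p n + coeff q n)"
        by (auto simp: min_def split: if_splits)
      then show ?thesis
      proof
        assume "v (coeff p n) \<le> v (coeff p n + coeff q n)"
        then have "qle \<delta> (n, v (coeff p n)) s" using n by (simp add: qle_same)
        then show ?thesis using tp T_mem[OF a] qle_trans[OF d] by blast
      next
        assume "v (coeff q n) \<le> v (coeff p n + coeff q n)"
        then have "qle \<delta> (n, v (coeff q n)) s" using n by (simp add: qle_same)
        then show ?thesis using tq T_mem[OF b] qle_trans[OF d] by blast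
      qed
    qed
  qed
qed

end

lemma Fract_zero_iff: "b \<noteq> 0 \<Longrightarrow> Fract a b = 0 \<longleftrightarrow> a = 0"
  by (simp add: Zero_fract_def eq_fract)

definition FR :: "('m \<Rightarrow> 'm \<Rightarrow> bool) \<Rightarrow> ('m \<Rightarrow> 'm \<Rightarrow> 'm) \<Rightarrow> ('k::idom poly \<Rightarrow> 'm)
   \<Rightarrow> 'k poly fract \<Rightarrow> 'k poly fract \<Rightarrow> bool" where
  "FR le add w x y \<longleftrightarrow> y = 0 \<or> (x \<noteq> 0 \<and> (\<exists>f1 g1 f2 g2. g1 \<noteq> 0 \<and> g2 \<noteq> 0 \<and>
      x = Fract f1 g1 \<and> y = Fract f2 g2 \<and> le (add (w f1) (w g2)) (add (w f2) (w g1))))"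

lemma omega_FR: "omega v a \<delta> = FR (qle \<delta>) padd (omega_val v a \<delta>)"
  unfolding omega_def FR_def by (intro ext) simp
lemma omegaB_FR: "omegaB v N = FR (\<le>) (+) (wnest v N)"
  unfolding omegaB_def FR_def by (intro ext) simp

locale fval = abel_semigroup add
  for add :: "'m \<Rightarrow> 'm \<Rightarrow> 'm" +
  fixes le :: "'m \<Rightarrow> 'm \<Rightarrow> bool" and C :: "'m set"
    and w :: "'k::field poly \<Rightarrow> 'm" and v :: "'k \<Rightarrow> 'g::linordered_ab_group_add"
  assumes refl: "le s s"
    and trans: "le s t \<Longrightarrow> le t u \<Longrightarrow> le s u"
    and total: "s \<in> C \<Longrightarrow> t \<in> C \<Longrightarrow> le s t \<or> le t s"
    and cancel: "le (add s u) (add t u) \<longleftrightarrow> le s t"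
    and addC: "s \<in> C \<Longrightarrow> t \<in> C \<Longrightarrow> add s t \<in> C"
    and wC: "f \<noteq> 0 \<Longrightarrow> w f \<in> C"
    and wmult1: "f \<noteq> 0 \<Longrightarrow> g \<noteq> 0 \<Longrightarrow> le (w (f * g)) (add (w f) (w g))"
    and wmult2: "f \<noteq> 0 \<Longrightarrow> g \<noteq> 0 \<Longrightarrow> le (add (w f) (w g)) (w (f * g))"
    and wadd: "f \<noteq> 0 \<Longrightarrow> g \<noteq> 0 \<Longrightarrow> f + g \<noteq> 0 \<Longrightarrow> le (w f) (w (f + g)) \<or> le (w g) (w (f + g))"
    and wconst: "c \<noteq> 0 \<Longrightarrow> d \<noteq> 0 \<Longrightarrow> le (w [:c:]) (w [:d:]) \<longleftrightarrow> v c \<le> v d"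
begin

definition eqv where "eqv s t \<longleftrightarrow> le s t \<and> le t s"

lemma cancel': "le (add u s) (add u t) \<longleftrightarrow> le s t"
proof -
  have "add u s = add s u" "add u t = add t u" by (rule commute)+
  then show ?thesis using cancel by simp
qed
lemma mono: "le s t \<Longrightarrow> le s' t' \<Longrightarrow> le (add s s') (add t t')"
  by (meson cancel cancel' trans)
lemma eqv_add: "eqv s t \<Longrightarrow> eqv s' t' \<Longrightarrow> eqv (add s s') (add t t')"
  unfolding eqv_def using mono by blast
lemma le_cong: "eqv s s' \<Longrightarrow> eqv t t' \<Longrightarrow> le s t \<longleftrightarrow> le s' t'"
  unfolding eqv_def using trans by blast
lemma eqv_refl: "eqv s s" unfolding eqv_def using refl by blast
lemma eqv_sym: "eqv s t \<Longrightarrow> eqv t s" unfolding eqv_def by blast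
lemma wmult: "f \<noteq> 0 \<Longrightarrow> g \<noteq> 0 \<Longrightarrow> eqv (w (f * g)) (add (w f) (w g))"
  unfolding eqv_def using wmult1 wmult2 by blast

lemma cross_eqv: assumes "g \<noteq> 0" "g' \<noteq> 0" "f \<noteq> 0" "f' \<noteq> 0" "f * g' = f' * g"
  shows "eqv (add (w f) (w g')) (add (w f') (w g))"
proof -
  have "eqv (add (w f) (w g')) (w (f * g'))" using wmult[of f g'] assms eqv_sym by blast
  moreover have "eqv (w (f' * g)) (add (w f') (w g))" using wmult[of f' g] assms by blast
  ultimately show ?thesis using assms(5) unfolding eqv_def using trans by metis
qed

lemma rep_indep:
  assumes nz: "f1 \<noteq> 0" "g1 \<noteq> 0" "f2 \<noteq> 0" "g2 \<noteq> 0" "f1' \<noteq> 0" "g1' \<noteq> 0" "f2' \<noteq> 0" "g2' \<noteq> 0"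
    and e1: "Fract f1 g1 = Fract f1' g1'" and e2: "Fract f2 g2 = Fract f2' g2'"
    and h: "le (add (w f1) (w g2)) (add (w f2) (w g1))"
  shows "le (add (w f1') (w g2')) (add (w f2') (w g1'))"
proof -
  let ?A = "w f1" and ?B = "w g1" and ?A' = "w f1'" and ?B' = "w g1'"
  let ?C = "w f2" and ?D = "w g2" and ?C' = "w f2'" and ?D' = "w g2'"
  have "f1 * g1' = f1' * g1" using e1 nz by (simp add: eq_fract)
  then have E1: "eqv (add ?A' ?B) (add ?A ?B')"
    using cross_eqv[of g1' g1 f1' f1] nz by simp
  have E2: "eqv (add ?C ?D') (add ?C' ?D)"
    using cross_eqv[of g2 g2' f2 f2'] nz e2 by (simp add: eq_fract)
  have "le (add (add ?A ?D) (add ?B' ?D')) (add (add ?C ?B) (add ?B' ?D'))"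
    using h cancel by blast
  moreover have "eqv (add (add ?A ?D) (add ?B' ?D')) (add (add ?A' ?D') (add ?B ?D))"
  proof -
    have "eqv (add (add ?A ?B') (add ?D ?D')) (add (add ?A' ?B) (add ?D ?D'))"
      using eqv_add[OF eqv_sym[OF E1] eqv_refl] .
    then show ?thesis by (simp add: assoc commute left_commute)
  qed
  moreover have "eqv (add (add ?C ?B) (add ?B' ?D')) (add (add ?C' ?B') (add ?B ?D))"
  proof -
    have "eqv (add (add ?C ?D') (add ?B ?B')) (add (add ?C' ?D) (add ?B ?B'))"
      using eqv_add[OF E2 eqv_refl] .
    then show ?thesis by (simp add: assoc commute left_commute)
  qed
  ultimately have "le (add (add ?A' ?D') (add ?B ?D)) (add (add ?C' ?B') (add ?B ?D))"
    using le_cong by blast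
  then show ?thesis using cancel by blast
qed

abbreviation "R \<equiv> FR le add w"

lemma R_iff: assumes "f1 \<noteq> 0" "g1 \<noteq> 0" "f2 \<noteq> 0" "g2 \<noteq> 0"
  shows "R (Fract f1 g1) (Fract f2 g2) \<longleftrightarrow> le (add (w f1) (w g2)) (add (w f2) (w g1))"
proof
  assume "R (Fract f1 g1) (Fract f2 g2)"
  then obtain f1' g1' f2' g2' where h: "g1' \<noteq> 0" "g2' \<noteq> 0" "Fract f1 g1 = Fract f1' g1'"
    "Fract f2 g2 = Fract f2' g2'" "le (add (w f1') (w g2')) (add (w f2') (w g1'))"
    using assms unfolding FR_def by (auto simp: Fract_zero_iff)
  have "f1' \<noteq> 0" "f2' \<noteq> 0" using h assms by (metis Fract_zero_iff)+
  then show "le (add (w f1) (w g2)) (add (w f2) (w g1))"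
    using rep_indep[of f1' g1' f2' g2' f1 g1 f2 g2] h assms by simp
next
  assume "le (add (w f1) (w g2)) (add (w f2) (w g1))"
  then show "R (Fract f1 g1) (Fract f2 g2)" using assms unfolding FR_def
    by (auto simp: Fract_zero_iff)
qed

lemma R_val_class: "is_val_class v R"
  unfolding is_val_class_def
proof (intro conjI allI impI)
  fix x y :: "'k poly fract"
  show "R x y \<or> R y x"
  proof (cases "x = 0 \<or> y = 0")
    case True then show ?thesis unfolding FR_def by auto
  next
    case False
    obtain f1 g1 where x: "x = Fract f1 g1" "g1 \<noteq> 0" "f1 \<noteq> 0" using False Fract_cases_nonzero by metis
    obtain f2 g2 where y: "y = Fract f2 g2" "g2 \<noteq> 0" "f2 \<noteq> 0" using False Fract_cases_nonzero by metis
    have "le (add (w f1) (w g2)) (add (w f2) (w g1)) \<or> le (add (w f2) (w g1)) (add (w f1) (w g2))"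
      using total addC wC x y by simp
    then show ?thesis using R_iff x y by auto
  qed
next
  fix x y z :: "'k poly fract"
  assume xy: "R x y" and yz: "R y z"
  show "R x z"
  proof (cases "x = 0 \<or> y = 0 \<or> z = 0")
    case True then show ?thesis using xy yz unfolding FR_def by auto
  next
    case False
    obtain f1 g1 where x: "x = Fract f1 g1" "g1 \<noteq> 0" "f1 \<noteq> 0" using False Fract_cases_nonzero by metis
    obtain f2 g2 where y: "y = Fract f2 g2" "g2 \<noteq> 0" "f2 \<noteq> 0" using False Fract_cases_nonzero by metis
    obtain f3 g3 where z: "z = Fract f3 g3" "g3 \<noteq> 0" "f3 \<noteq> 0" using False Fract_cases_nonzero by metis
    have 1: "le (add (w f1) (w g2)) (add (w f2) (w g1))" using xy R_iff x y by auto
    have 2: "le (add (w f2) (w g3)) (add (w f3) (w g2))" using yz R_iff y z by auto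
    have "le (add (add (w f1) (w g2)) (add (w f2) (w g3))) (add (add (w f2) (w g1)) (add (w f3) (w g2)))"
      using mono[OF 1 2] .
    then have "le (add (add (w f1) (w g3)) (add (w f2) (w g2))) (add (add (w f3) (w g1)) (add (w f2) (w g2)))"
      by (simp add: assoc commute left_commute)
    then have "le (add (w f1) (w g3)) (add (w f3) (w g1))" using cancel by blast
    then show ?thesis using R_iff x z by auto
  qed
next
  fix x :: "'k poly fract" show "R x 0" unfolding FR_def by simp
next
  fix x :: "'k poly fract" assume "R 0 x" then show "x = 0" unfolding FR_def by simp
next
  fix x y z :: "'k poly fract"
  assume xy: "R x y"
  show "R (x * z) (y * z)"
  proof (cases "x = 0 \<or> y = 0 \<or> z = 0")
    case True then show ?thesis using xy unfolding FR_def by auto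
  next
    case False
    obtain f1 g1 where x: "x = Fract f1 g1" "g1 \<noteq> 0" "f1 \<noteq> 0" using False Fract_cases_nonzero by metis
    obtain f2 g2 where y: "y = Fract f2 g2" "g2 \<noteq> 0" "f2 \<noteq> 0" using False Fract_cases_nonzero by metis
    obtain f3 g3 where z: "z = Fract f3 g3" "g3 \<noteq> 0" "f3 \<noteq> 0" using False Fract_cases_nonzero by metis
    have 1: "le (add (w f1) (w g2)) (add (w f2) (w g1))" using xy R_iff x y by auto
    have "le (add (add (w f1) (w g2)) (add (w f3) (w g3))) (add (add (w f2) (w g1)) (add (w f3) (w g3)))"
      using 1 cancel by blast
    moreover have "eqv (add (add (w f1) (w g2)) (add (w f3) (w g3))) (add (w (f1 * f3)) (w (g2 * g3)))"
      using eqv_add[OF wmult[of f1 f3] wmult[of g2 g3]] x y z eqv_sym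
      by (simp add: assoc commute left_commute)
    moreover have "eqv (add (add (w f2) (w g1)) (add (w f3) (w g3))) (add (w (f2 * f3)) (w (g1 * g3)))"
      using eqv_add[OF wmult[of f2 f3] wmult[of g1 g3]] x y z eqv_sym
      by (simp add: assoc commute left_commute)
    ultimately have "le (add (w (f1 * f3)) (w (g2 * g3))) (add (w (f2 * f3)) (w (g1 * g3)))"
      using le_cong by blast
    then show ?thesis using R_iff[of "f1 * f3" "g1 * g3" "f2 * f3" "g2 * g3"] x y z by simp
  qed
next
  fix x y z :: "'k poly fract"
  assume xy: "R x y" and xz: "R x z"
  show "R x (y + z)"
  proof -
  have x0: "x = 0 \<Longrightarrow> y = 0" using xy unfolding FR_def by auto
  show ?thesis
  proof (cases "y + z = 0")
    case True then show ?thesis unfolding FR_def by simp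
  next
    case F1: False
  show ?thesis
  proof (cases "y = 0")
    case True then show ?thesis using xz by simp
  next
    case F2: False
  show ?thesis
  proof (cases "z = 0")
    case True then show ?thesis using xy by simp
  next
    case F3: False
  show ?thesis
  proof (cases "x = 0 \<or> y = 0 \<or> z = 0 \<or> y + z = 0")
    case True then show ?thesis using x0 F1 F2 F3 by blast
  next
    case False
    obtain f1 g1 where x: "x = Fract f1 g1" "g1 \<noteq> 0" "f1 \<noteq> 0" using False Fract_cases_nonzero by metis
    obtain f2 g2 where y: "y = Fract f2 g2" "g2 \<noteq> 0" "f2 \<noteq> 0" using False Fract_cases_nonzero by metis
    obtain f3 g3 where z: "z = Fract f3 g3" "g3 \<noteq> 0" "f3 \<noteq> 0" using False Fract_cases_nonzero by metis
    have 1: "le (add (w f1) (w g2)) (add (w f2) (w g1))" using xy R_iff x y by auto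
    have 2: "le (add (w f1) (w g3)) (add (w f3) (w g1))" using xz R_iff x z by auto
    let ?N = "f2 * g3 + f3 * g2"
    have yz: "y + z = Fract ?N (g2 * g3)" using y z by simp
    have N: "?N \<noteq> 0" using False yz y z by (auto simp: Fract_zero_iff)
    have nz: "f2 * g3 \<noteq> 0" "f3 * g2 \<noteq> 0" using y z by auto
    have goal: "le (add (w f1) (w (g2 * g3))) (add (w ?N) (w g1))"
    proof -
      have E: "eqv (add (w f1) (w (g2 * g3))) (add (add (w f1) (w g2)) (w g3))"
        using eqv_add[OF eqv_refl wmult[of g2 g3]] y z by (simp add: assoc)
      have E': "eqv (add (w f1) (w (g2 * g3))) (add (add (w f1) (w g3)) (w g2))"
        using eqv_add[OF eqv_refl wmult[of g2 g3]] y z by (simp add: assoc commute left_commute)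
      from wadd[OF nz N] show ?thesis
      proof
        assume a: "le (w (f2 * g3)) (w ?N)"
        have "le (add (add (w f1) (w g2)) (w g3)) (add (add (w f2) (w g1)) (w g3))"
          using 1 cancel by blast
        moreover have "eqv (add (add (w f2) (w g1)) (w g3)) (add (w (f2 * g3)) (w g1))"
          using eqv_add[OF eqv_sym[OF wmult[of f2 g3]] eqv_refl[of "w g1"]] y z
          by (simp add: assoc commute left_commute)
        ultimately have "le (add (w f1) (w (g2 * g3))) (add (w (f2 * g3)) (w g1))"
          using le_cong[OF E] eqv_refl by (meson le_cong)
        moreover have "le (add (w (f2 * g3)) (w g1)) (add (w ?N) (w g1))" using a cancel by blast
        ultimately show ?thesis using trans by blast
      next
        assume a: "le (w (f3 * g2)) (w ?N)"
        have "le (add (add (w f1) (w g3)) (w g2)) (add (add (w f3) (w g1)) (w g2))"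
          using 2 cancel by blast
        moreover have "eqv (add (add (w f3) (w g1)) (w g2)) (add (w (f3 * g2)) (w g1))"
          using eqv_add[OF eqv_sym[OF wmult[of f3 g2]] eqv_refl[of "w g1"]] y z
          by (simp add: assoc commute left_commute)
        ultimately have "le (add (w f1) (w (g2 * g3))) (add (w (f3 * g2)) (w g1))"
          using le_cong[OF E'] eqv_refl by (meson le_cong)
        moreover have "le (add (w (f3 * g2)) (w g1)) (add (w ?N) (w g1))" using a cancel by blast
        ultimately show ?thesis using trans by blast
      qed
    qed
    then show ?thesis using R_iff[of f1 g1 ?N "g2 * g3"] x y z N yz by simp
  qed qed qed qed qed
next
  fix c d :: 'k assume "c \<noteq> 0" "d \<noteq> 0"
  then have "R (cst c) (cst d) \<longleftrightarrow> le (add (w [:c:]) (w 1)) (add (w [:d:]) (w 1))"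
    unfolding cst_def by (intro R_iff) auto
  also have "\<dots> \<longleftrightarrow> v c \<le> v d" using cancel wconst \<open>c \<noteq> 0\<close> \<open>d \<noteq> 0\<close> by simp
  finally show "R (cst c) (cst d) \<longleftrightarrow> v c \<le> v d" .
qed

end

context VF begin

abbreviation Pa :: "'k \<Rightarrow> 'k poly \<Rightarrow> 'k poly" where "Pa a f \<equiv> pcompose f [:a, 1:]"

lemma Pa_nz: "f \<noteq> 0 \<Longrightarrow> Pa a f \<noteq> 0"
  using pcompose_eq_0[of f "[:a, 1:]"] by auto

lemma ov_min: assumes "\<delta> \<in> Qcuts G" "f \<noteq> 0"
  shows "omega_val v a \<delta> f \<in> T (Pa a f) \<and> (\<forall>s\<in>T (Pa a f). qle \<delta> (omega_val v a \<delta> f) s)"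
proof -
  have "\<exists>t. t \<in> T (Pa a f) \<and> (\<forall>s\<in>T (Pa a f). qle \<delta> t s)"
    using min_exists[OF assms(1) T_finite T_ne[OF Pa_nz[OF assms(2)]]] T_G by blast
  then show ?thesis unfolding omega_val_def terms_T by (rule someI_ex)
qed

lemma ov_G: "\<delta> \<in> Qcuts G \<Longrightarrow> f \<noteq> 0 \<Longrightarrow> snd (omega_val v a \<delta> f) \<in> G"
  using ov_min T_G by blast

lemma ov_mult: assumes d: "\<delta> \<in> Qcuts G" and "f \<noteq> 0" "g \<noteq> 0"
  shows "qeq \<delta> (omega_val v a \<delta> (f * g)) (padd (omega_val v a \<delta> f) (omega_val v a \<delta> g))"
proof -
  have mf: "omega_val v a \<delta> f \<in> T (Pa a f)" "\<forall>s\<in>T (Pa a f). qle \<delta> (omega_val v a \<delta> f) s"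
    using ov_min[OF d assms(2)] by auto
  have mg: "omega_val v a \<delta> g \<in> T (Pa a g)" "\<forall>s\<in>T (Pa a g). qle \<delta> (omega_val v a \<delta> g) s"
    using ov_min[OF d assms(3)] by auto
  obtain t where t: "t \<in> T (Pa a f * Pa a g)" "qeq \<delta> t (padd (omega_val v a \<delta> f) (omega_val v a \<delta> g))"
      "\<forall>s\<in>T (Pa a f * Pa a g). qle \<delta> t s"
    using gauss_mult[OF d Pa_nz[OF assms(2)] Pa_nz[OF assms(3)] mf mg] by blast
  have m: "omega_val v a \<delta> (f * g) \<in> T (Pa a f * Pa a g)" "\<forall>s\<in>T (Pa a f * Pa a g). qle \<delta> (omega_val v a \<delta> (f * g)) s"
    using ov_min[OF d, of "f * g" a] assms by (auto simp: pcompose_mult)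
  have "qeq \<delta> (omega_val v a \<delta> (f * g)) t" unfolding qeq_def using t m by blast
  then show ?thesis using t(2) qle_trans[OF d] unfolding qeq_def by blast
qed

lemma ov_add: assumes d: "\<delta> \<in> Qcuts G" and "f \<noteq> 0" "g \<noteq> 0" "f + g \<noteq> 0"
  shows "qle \<delta> (omega_val v a \<delta> f) (omega_val v a \<delta> (f + g)) \<or> qle \<delta> (omega_val v a \<delta> g) (omega_val v a \<delta> (f + g))"
proof -
  have "omega_val v a \<delta> (f + g) \<in> T (Pa a f + Pa a g)"
    using ov_min[OF d assms(4), of a] by (simp add: pcompose_add)
  then show ?thesis using gauss_add[OF d] ov_min[OF d] assms by blast
qed

lemma T_const: assumes "c \<noteq> 0" shows "T [:c:] = {(0, v c)}"
proof -
  have e: "coeff [:c:] n \<noteq> 0 \<longleftrightarrow> n = 0" for n using assms by (cases n) auto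
  show ?thesis unfolding T_def using e by auto
qed

lemma ov_const: assumes "\<delta> \<in> Qcuts G" "c \<noteq> 0" shows "omega_val v a \<delta> [:c:] = (0, v c)"
  using ov_min[OF assms(1), of "[:c:]" a] assms T_const by auto

lemma omega_fval: assumes d: "\<delta> \<in> Qcuts G"
  shows "fval padd (qle \<delta>) {s. snd s \<in> G} (omega_val v a \<delta>) v"
proof (unfold_locales)
  show "padd (padd a b) c = padd a (padd b c)" for a b c by (rule padd_assoc)
  show "padd a b = padd b a" for a b by (rule padd_comm)
  show "qle \<delta> s s" for s by (rule qle_refl)
  show "qle \<delta> s t \<Longrightarrow> qle \<delta> t u \<Longrightarrow> qle \<delta> s u" for s t u using qle_trans[OF d] by blast
  show "s \<in> {s. snd s \<in> G} \<Longrightarrow> t \<in> {s. snd s \<in> G} \<Longrightarrow> qle \<delta> s t \<or> qle \<delta> t s" for s t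
    using qle_total[OF d] by auto
  show "qle \<delta> (padd s u) (padd t u) = qle \<delta> s t" for s t u by (rule qle_padd)
  show "s \<in> {s. snd s \<in> G} \<Longrightarrow> t \<in> {s. snd s \<in> G} \<Longrightarrow> padd s t \<in> {s. snd s \<in> G}" for s t
    by (auto simp: padd_def G_add)
  show "f \<noteq> 0 \<Longrightarrow> omega_val v a \<delta> f \<in> {s. snd s \<in> G}" for f using ov_G[OF d] by auto
  show "f \<noteq> 0 \<Longrightarrow> g \<noteq> 0 \<Longrightarrow> qle \<delta> (omega_val v a \<delta> (f * g)) (padd (omega_val v a \<delta> f) (omega_val v a \<delta> g))" for f g
    using ov_mult[OF d] unfolding qeq_def by blast
  show "f \<noteq> 0 \<Longrightarrow> g \<noteq> 0 \<Longrightarrow> qle \<delta> (padd (omega_val v a \<delta> f) (omega_val v a \<delta> g)) (omega_val v a \<delta> (f * g))" for f g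
    using ov_mult[OF d] unfolding qeq_def by blast
  show "f \<noteq> 0 \<Longrightarrow> g \<noteq> 0 \<Longrightarrow> f + g \<noteq> 0 \<Longrightarrow> qle \<delta> (omega_val v a \<delta> f) (omega_val v a \<delta> (f + g)) \<or> qle \<delta> (omega_val v a \<delta> g) (omega_val v a \<delta> (f + g))" for f g
    using ov_add[OF d] by blast
  show "c \<noteq> 0 \<Longrightarrow> d \<noteq> 0 \<Longrightarrow> qle \<delta> (omega_val v a \<delta> [:c:]) (omega_val v a \<delta> [:d:]) = (v c \<le> v d)" for c d
    using ov_const[OF d] by (simp add: qle_same)
qed

lemma omega_val_class: "\<delta> \<in> Qcuts G \<Longrightarrow> is_val_class v (omega v a \<delta>)"
  unfolding omega_FR using fval.R_val_class[OF omega_fval] by blast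

lemma omega_iff: assumes "\<delta> \<in> Qcuts G" "f1 \<noteq> 0" "g1 \<noteq> 0" "f2 \<noteq> 0" "g2 \<noteq> 0"
  shows "omega v a \<delta> (Fract f1 g1) (Fract f2 g2) \<longleftrightarrow>
    qle \<delta> (padd (omega_val v a \<delta> f1) (omega_val v a \<delta> g2)) (padd (omega_val v a \<delta> f2) (omega_val v a \<delta> g1))"
  unfolding omega_FR using fval.R_iff[OF omega_fval[OF assms(1)]] assms(2-) by blast

end

lemma pfr_mult: "pfr (f * g) = pfr f * pfr g" unfolding pfr_def by simp
lemma cst_pfr: "cst c = pfr [:c:]" unfolding cst_def pfr_def ..
lemma cst_mult: "cst c * cst d = cst (c * d)" unfolding cst_def by (simp add: mult.commute)
lemma cst_one[simp]: "cst 1 = 1" unfolding cst_def One_fract_def by (simp add: one_pCons)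
lemma pfr_one[simp]: "pfr 1 = 1" unfolding pfr_def by (simp add: One_fract_def)
lemma pfr_nz: "f \<noteq> 0 \<Longrightarrow> pfr f \<noteq> 0" unfolding pfr_def by (simp add: Fract_zero_iff)
lemma pfr_eq0: "pfr f = 0 \<longleftrightarrow> f = 0" unfolding pfr_def by (simp add: Fract_zero_iff)
lemma cst_nz: "c \<noteq> 0 \<Longrightarrow> cst c \<noteq> 0" unfolding cst_def by (simp add: Fract_zero_iff)
lemma cst_power: "cst c ^ n = cst (c ^ n)"
  by (induction n) (auto simp: cst_mult[symmetric] mult.commute)
lemma pfr_power: "pfr f ^ n = pfr (f ^ n)"
  by (induction n) (auto simp: pfr_mult)
lemma cst_inverse: "c \<noteq> 0 \<Longrightarrow> inverse (cst c) = cst (inverse c)"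
  using cst_mult[of c "inverse c"] cst_nz by (metis cst_one inverse_unique right_inverse)
lemma Fract_pfr: "g \<noteq> 0 \<Longrightarrow> Fract f g = pfr f * inverse (pfr g)"
  unfolding pfr_def by simp
lemma Fract_cross: "g1 \<noteq> 0 \<Longrightarrow> g2 \<noteq> 0 \<Longrightarrow> Fract f1 g1 * pfr (g1 * g2) = pfr (f1 * g2)"
  unfolding pfr_def by (simp add: eq_fract)
lemma Fract_cross': "g1 \<noteq> 0 \<Longrightarrow> g2 \<noteq> 0 \<Longrightarrow> Fract f2 g2 * pfr (g1 * g2) = pfr (f2 * g1)"
  unfolding pfr_def by (simp add: eq_fract)

definition X :: "'k::field \<Rightarrow> 'k poly fract" where "X a = pfr [:-a, 1:]"
lemma X_nz: "X a \<noteq> 0" unfolding X_def by (simp add: pfr_nz)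

locale VQ = VF v for v :: "'k::field \<Rightarrow> 'g::linordered_ab_group_add" +
  fixes Q :: "'k poly fract \<Rightarrow> 'k poly fract \<Rightarrow> bool"
  assumes vc: "is_val_class v Q"
begin

lemmas vcs = vc[unfolded is_val_class_def]
lemma Qtot: "Q x y \<or> Q y x" using conjunct1[OF vcs] by blast
lemma Qtrans: "Q x y \<Longrightarrow> Q y z \<Longrightarrow> Q x z" using conjunct1[OF conjunct2[OF vcs]] by blast
lemma Qrefl: "Q x x" using Qtot by blast
lemma Q0: "Q x 0" using conjunct1[OF conjunct2[OF conjunct2[OF vcs]]] by blast
lemma Q0': "Q 0 x \<Longrightarrow> x = 0" using conjunct1[OF conjunct2[OF conjunct2[OF conjunct2[OF vcs]]]] by blast
lemma Qmult: "Q x y \<Longrightarrow> Q (x * z) (y * z)"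
  using conjunct1[OF conjunct2[OF conjunct2[OF conjunct2[OF conjunct2[OF vcs]]]]] by blast
lemma Qmult': "Q x y \<Longrightarrow> Q (z * x) (z * y)" using Qmult[of x y z] by (simp add: mult.commute)
lemma Qadd: "Q x y \<Longrightarrow> Q x z \<Longrightarrow> Q x (y + z)"
  using conjunct1[OF conjunct2[OF conjunct2[OF conjunct2[OF conjunct2[OF conjunct2[OF vcs]]]]]] by blast
lemma Qcst: "c \<noteq> 0 \<Longrightarrow> d \<noteq> 0 \<Longrightarrow> Q (cst c) (cst d) \<longleftrightarrow> v c \<le> v d"
  using conjunct2[OF conjunct2[OF conjunct2[OF conjunct2[OF conjunct2[OF conjunct2[OF vcs]]]]]] by blast
lemma Qcancel: assumes "z \<noteq> 0" "Q (x * z) (y * z)" shows "Q x y"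
proof -
  have "Q (x * z * inverse z) (y * z * inverse z)" using Qmult[OF assms(2)] .
  moreover have "x * z * inverse z = x" "y * z * inverse z = y" using assms(1) by (simp_all add: field_simps)
  ultimately show ?thesis by simp
qed
lemma Qcancel_iff: "z \<noteq> 0 \<Longrightarrow> Q (x * z) (y * z) \<longleftrightarrow> Q x y"
  using Qcancel Qmult by blast
lemma Qmono: "Q x y \<Longrightarrow> Q x' y' \<Longrightarrow> Q (x * x') (y * y')"
  by (meson Qmult Qmult' Qtrans)

definition Qeq where "Qeq x y \<longleftrightarrow> Q x y \<and> Q y x"
definition Qlt where "Qlt x y \<longleftrightarrow> \<not> Q y x"

lemma Qeq_refl: "Qeq x x" unfolding Qeq_def using Qrefl by blast
lemma Qeq_sym: "Qeq x y \<Longrightarrow> Qeq y x" unfolding Qeq_def by blast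
lemma Qeq_trans: "Qeq x y \<Longrightarrow> Qeq y z \<Longrightarrow> Qeq x z" unfolding Qeq_def using Qtrans by blast
lemma Qeq_mult: "Qeq x y \<Longrightarrow> Qeq x' y' \<Longrightarrow> Qeq (x * x') (y * y')" unfolding Qeq_def using Qmono by blast
lemma Q_cong: "Qeq x x' \<Longrightarrow> Qeq y y' \<Longrightarrow> Q x y \<longleftrightarrow> Q x' y'" unfolding Qeq_def using Qtrans by blast
lemma Qlt_imp: "Qlt x y \<Longrightarrow> Q x y" unfolding Qlt_def using Qtot by blast
lemma Qlt_trans1: "Qlt x y \<Longrightarrow> Q y z \<Longrightarrow> Qlt x z" unfolding Qlt_def using Qtrans by blast
lemma Qlt_trans2: "Q x y \<Longrightarrow> Qlt y z \<Longrightarrow> Qlt x z" unfolding Qlt_def using Qtrans by blast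

lemma Qm1: "Qeq (cst (-1)) 1"
proof -
  have "Q (cst (-1)) (cst 1)" "Q (cst 1) (cst (-1))" using Qcst[of "-1" 1] Qcst[of 1 "-1"] vm1 by simp_all
  then show ?thesis unfolding Qeq_def by simp
qed
lemma cst_m1: "cst (-1) = - 1"
proof -
  have "cst (-1) = - cst 1" unfolding cst_def by simp
  then show ?thesis by simp
qed
lemma Qneg: "Qeq (- x) x"
proof -
  have "- x = cst (-1) * x" unfolding cst_m1 by simp
  then show ?thesis using Qeq_mult[OF Qm1 Qeq_refl[of x]] by simp
qed
lemma Qsub: assumes "Q x y" "Q x z" shows "Q x (y - z)"
proof -
  have "Q x (- z)" using assms(2) Qneg[of z] Qtrans unfolding Qeq_def by blast
  then have "Q x (y + - z)" using Qadd assms(1) by blast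
  then show ?thesis by simp
qed

lemma Qstrict: assumes "Qlt x y" shows "Qeq (x + y) x"
proof -
  have a: "Q x (x + y)" using Qadd[OF Qrefl Qlt_imp[OF assms]] .
  have "Q (x + y) x"
  proof (rule ccontr)
    assume n: "\<not> Q (x + y) x"
    from Qtot[of "x + y" "- y"] show False
    proof
      assume "Q (x + y) (- y)"
      then have "Q (x + y) ((x + y) + - y)" using Qadd[OF Qrefl] by blast
      then show False using n by simp
    next
      assume "Q (- y) (x + y)"
      then have "Q (- y) (- y + (x + y))" using Qadd[OF Qrefl] by blast
      then have "Q (- y) x" by simp
      then have "Q y x" using Qneg[of y] Qtrans unfolding Qeq_def by blast
      then show False using assms unfolding Qlt_def by blast
    qed
  qed
  then show ?thesis using a unfolding Qeq_def by blast
qed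

lemma Qstrict': "Qlt y x \<Longrightarrow> Qeq (x + y) y"
  using Qstrict[of y x] by (simp add: add.commute)

lemma Qlt_mono: assumes "Qlt x y" "Q x' y'" "y' \<noteq> 0" shows "Qlt (x * x') (y * y')"
  unfolding Qlt_def
proof
  assume h: "Q (y * y') (x * x')"
  have "Q (x * x') (x * y')" using Qmult'[OF assms(2)] .
  then have "Q (y * y') (x * y')" using h Qtrans by blast
  then have "Q y x" using Qcancel assms(3) by blast
  then show False using assms(1) unfolding Qlt_def by blast
qed

lemma Qlt_power: assumes "Qlt x y" "y \<noteq> 0" "k > 0" shows "Qlt (x ^ k) (y ^ k)"
  using assms(3)
proof (induction k)
  case (Suc k)
  show ?case
  proof (cases "k = 0")
    case True then show ?thesis using assms by simp
  next
    case False
    then have "Qlt (x ^ k) (y ^ k)" using Suc by simp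
    then have "Qlt (x ^ k * x) (y ^ k * y)" using Qlt_mono Qlt_imp[OF assms(1)] assms(2) by blast
    then show ?thesis by (simp add: mult.commute)
  qed
qed simp

lemma Q_power: "Q x y \<Longrightarrow> Q (x ^ k) (y ^ k)"
  by (induction k) (auto simp: Qrefl intro: Qmono)

lemma Q_pow_cancel: assumes "Q (x ^ k) (y ^ k)" "x \<noteq> 0" "k > 0" shows "Q x y"
proof (rule ccontr)
  assume "\<not> Q x y"
  then have "Qlt y x" unfolding Qlt_def .
  then have "Qlt (y ^ k) (x ^ k)" using Qlt_power assms by blast
  then show False using assms(1) unfolding Qlt_def by blast
qed

definition dQ :: "'k \<Rightarrow> 'g set \<times> 'g set" where
  "dQ a = ({v c | c. c \<noteq> 0 \<and> Q (cst c) (X a)}, {v c | c. c \<noteq> 0 \<and> Q (X a) (cst c)})"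

lemma dQ_Qcuts: "dQ a \<in> Qcuts G"
proof -
  have "fst (dQ a) \<union> snd (dQ a) = G"
  proof
    show "fst (dQ a) \<union> snd (dQ a) \<subseteq> G" unfolding dQ_def using G_v by auto
    show "G \<subseteq> fst (dQ a) \<union> snd (dQ a)"
    proof
      fix \<gamma> assume "\<gamma> \<in> G"
      then obtain c where "c \<noteq> 0" "\<gamma> = v c" using G_E by blast
      then show "\<gamma> \<in> fst (dQ a) \<union> snd (dQ a)" unfolding dQ_def using Qtot[of "cst c" "X a"] by auto
    qed
  qed
  moreover have "l \<le> r" if lr: "l \<in> fst (dQ a)" "r \<in> snd (dQ a)" for l r
  proof -
    obtain c d where "c \<noteq> 0" "d \<noteq> 0" "l = v c" "r = v d" "Q (cst c) (X a)" "Q (X a) (cst d)"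
      using lr unfolding dQ_def by auto
    then show ?thesis using Qtrans Qcst by blast
  qed
  ultimately show ?thesis unfolding Qcuts_def by (cases "dQ a") auto
qed

definition M :: "'k \<Rightarrow> nat \<Rightarrow> 'k \<Rightarrow> 'k poly fract" where "M a n c = X a ^ n * cst c"

lemma M_nz: "c \<noteq> 0 \<Longrightarrow> M a n c \<noteq> 0" unfolding M_def using X_nz[of a] cst_nz[of c] by simp
lemma M_mult: "M a n c * M a m d = M a (n + m) (c * d)"
  unfolding M_def by (simp add: power_add cst_mult[symmetric] ac_simps)

lemma sem_pos: assumes "k > 0" "b \<noteq> 0"
  shows "Q (X a ^ k) (cst b) \<longleftrightarrow> xle (dQ a) (int k) (v b)"
proof
  assume h: "Q (X a ^ k) (cst b)"
  obtain e where e: "e \<noteq> 0" "e ^ k = b" using nth_root assms by blast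
  have "Q (X a) (cst e)" using Q_pow_cancel[where x="X a" and y="cst e" and k=k] h e X_nz[of a] assms by (simp add: cst_power)
  then have "v e \<in> snd (dQ a)" unfolding dQ_def using e by auto
  moreover have "gmul k (v e) = v b" using vpow e by metis
  ultimately have "\<exists>r\<in>snd (dQ a). gmul k r \<le> v b" by (metis order_refl)
  then show "xle (dQ a) (int k) (v b)" using assms xle_pos[of "int k" "dQ a" "v b"] by simp
next
  assume "xle (dQ a) (int k) (v b)"
  then obtain \<rho> where "\<rho> \<in> snd (dQ a)" "gmul k \<rho> \<le> v b" using assms by (subst (asm) xle_pos) auto
  then obtain e where e: "e \<noteq> 0" "Q (X a) (cst e)" "gmul k (v e) \<le> v b" unfolding dQ_def by auto
  have "Q (X a ^ k) (cst (e ^ k))" using Q_power[OF e(2)] by (simp add: cst_power)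
  moreover have "Q (cst (e ^ k)) (cst b)" using Qcst e assms vpow by simp
  ultimately show "Q (X a ^ k) (cst b)" using Qtrans by blast
qed

lemma sem_neg: assumes "k > 0" "b \<noteq> 0"
  shows "Q (cst b) (X a ^ k) \<longleftrightarrow> xle (dQ a) (- int k) (- v b)"
proof
  assume h: "Q (cst b) (X a ^ k)"
  obtain e where e: "e \<noteq> 0" "e ^ k = b" using nth_root assms by blast
  have "Q (cst e) (X a)" using Q_pow_cancel[where x="cst e" and y="X a" and k=k] h e cst_nz[OF e(1)] assms by (simp add: cst_power)
  then have "v e \<in> fst (dQ a)" unfolding dQ_def using e by auto
  moreover have "gmul k (v e) = v b" using vpow e by metis
  ultimately have "\<exists>l\<in>fst (dQ a). v b \<le> gmul k l" by (metis order_refl)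
  then show "xle (dQ a) (- int k) (- v b)" using assms xle_neg[of "- int k" "dQ a" "- v b"] by simp
next
  assume "xle (dQ a) (- int k) (- v b)"
  then obtain l where "l \<in> fst (dQ a)" "v b \<le> gmul k l" using assms by (subst (asm) xle_neg) auto
  then obtain e where e: "e \<noteq> 0" "Q (cst e) (X a)" "v b \<le> gmul k (v e)" unfolding dQ_def by auto
  have "Q (cst (e ^ k)) (X a ^ k)" using Q_power[OF e(2)] by (simp add: cst_power)
  moreover have "Q (cst b) (cst (e ^ k))" using Qcst e assms vpow by simp
  ultimately show "Q (cst b) (X a ^ k)" using Qtrans by blast
qed

lemma sem: assumes "c \<noteq> 0" "d \<noteq> 0"
  shows "Q (M a n c) (M a m d) \<longleftrightarrow> qle (dQ a) (n, v c) (m, v d)"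
proof -
  have cd: "cst d = cst (d / c) * cst c" using assms by (simp add: cst_mult)
  have dc: "cst c = cst (c / d) * cst d" using assms by (simp add: cst_mult)
  have dcnz: "d / c \<noteq> 0" "c / d \<noteq> 0" using assms by auto
  have vdc: "v (d / c) = v d - v c" "v (c / d) = v c - v d" using vdiv assms by auto
  consider "n = m" | "n > m" | "n < m" by linarith
  then show ?thesis
  proof cases
    case 1
    have xm: "X a ^ m \<noteq> 0" using X_nz[of a] by simp
    have "M a n c = cst c * X a ^ m" "M a m d = cst d * X a ^ m" unfolding M_def 1 by (simp_all add: mult.commute)
    then have "Q (M a n c) (M a m d) \<longleftrightarrow> Q (cst c) (cst d)"
      using Qcancel_iff[OF xm, of "cst c" "cst d"] by simp
    then show ?thesis using 1 Qcst assms by (simp add: qle_same)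
  next
    case 2
    then obtain k where k: "n = m + k" "k > 0" by (metis less_imp_add_positive)
    have "M a n c = (X a ^ k * cst c) * X a ^ m" "M a m d = cst d * X a ^ m"
      unfolding M_def k by (simp_all add: power_add ac_simps)
    moreover have xm: "X a ^ m \<noteq> 0" using X_nz[of a] by simp
    ultimately have "Q (M a n c) (M a m d) \<longleftrightarrow> Q (X a ^ k * cst c) (cst d)"
      using Qcancel_iff[OF xm] by simp
    also have "\<dots> \<longleftrightarrow> Q (X a ^ k) (cst (d / c))"
      unfolding cd using Qcancel_iff[OF cst_nz[OF assms(1)], of "X a ^ k" "cst (d / c)"] .
    also have "\<dots> \<longleftrightarrow> xle (dQ a) (int k) (v d - v c)" using sem_pos[OF k(2) dcnz(1)] vdc(1) by simp
    also have "\<dots> \<longleftrightarrow> qle (dQ a) (n, v c) (m, v d)"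
    proof -
      have "int n - int m = int k" using k by simp
      then show ?thesis unfolding qle_def by simp
    qed
    finally show ?thesis .
  next
    case 3
    then obtain k where k: "m = n + k" "k > 0" by (metis less_imp_add_positive)
    have "M a n c = cst c * X a ^ n" "M a m d = (X a ^ k * cst d) * X a ^ n"
      unfolding M_def k by (simp_all add: power_add ac_simps)
    moreover have xm: "X a ^ n \<noteq> 0" using X_nz[of a] by simp
    ultimately have "Q (M a n c) (M a m d) \<longleftrightarrow> Q (cst c) (X a ^ k * cst d)"
      using Qcancel_iff[OF xm] by simp
    also have "\<dots> \<longleftrightarrow> Q (cst (c / d)) (X a ^ k)"
    proof -
      have "cst c = cst (c / d) * cst d" by (rule dc)
      moreover have "X a ^ k * cst d = X a ^ k * cst d" ..
      ultimately show ?thesis using Qcancel_iff[OF cst_nz[OF assms(2)], of "cst (c / d)" "X a ^ k"] by simp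
    qed
    also have "\<dots> \<longleftrightarrow> xle (dQ a) (- int k) (- v (c / d))" using sem_neg[OF k(2) dcnz(2)] by simp
    also have "\<dots> \<longleftrightarrow> qle (dQ a) (n, v c) (m, v d)"
    proof -
      have "int n - int m = - int k" using k by simp
      moreover have "- v (c / d) = v d - v c" using vdc(2) by simp
      ultimately show ?thesis unfolding qle_def by simp
    qed
    finally show ?thesis .
  qed
qed

end

lemma qle_cong: "\<delta> \<in> Qcuts G \<Longrightarrow> qeq \<delta> s s' \<Longrightarrow> qeq \<delta> t t' \<Longrightarrow> qle \<delta> s t \<longleftrightarrow> qle \<delta> s' t'"
  unfolding qeq_def using qle_trans by blast
lemma qeq_trans: "\<delta> \<in> Qcuts G \<Longrightarrow> qeq \<delta> s t \<Longrightarrow> qeq \<delta> t u \<Longrightarrow> qeq \<delta> s u"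
  unfolding qeq_def using qle_trans by blast
lemma qeq_sym: "qeq \<delta> s t \<Longrightarrow> qeq \<delta> t s" unfolding qeq_def by blast
lemma qeq_refl: "qeq \<delta> s s" unfolding qeq_def by (simp add: qle_refl)
lemma qeq_padd: "\<delta> \<in> Qcuts G \<Longrightarrow> qeq \<delta> s t \<Longrightarrow> qeq \<delta> s' t' \<Longrightarrow> qeq \<delta> (padd s s') (padd t t')"
  unfolding qeq_def using qle_padd_mono by blast

lemma pcomp_lin: fixes a r :: "'a::field" shows "pcompose [:-r, 1:] [:a, 1:] = [:a - r, 1:]"
  by (simp add: pcompose_pCons algebra_simps)

context VF begin

lemma T_lin: "T [:a - r, 1:] = {(1, 0)} \<union> (if a = r then {} else {(0, v (a - r))})"
proof -
  have c: "coeff [:a - r, 1:] n = (if n = 0 then a - r else if n = 1 then 1 else 0)" for n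
  proof (cases n)
    case (Suc m) then show ?thesis by (cases m) simp_all
  qed simp
  show ?thesis unfolding T_def c by (auto split: if_splits)
qed

lemma ov_lin: assumes "\<delta> \<in> Qcuts G"
  shows "omega_val v a \<delta> [:-r, 1:] \<in> {(1, 0)} \<union> (if a = r then {} else {(0, v (a - r))})"
    "qle \<delta> (omega_val v a \<delta> [:-r, 1:]) (1, 0)"
    "a \<noteq> r \<Longrightarrow> qle \<delta> (omega_val v a \<delta> [:-r, 1:]) (0, v (a - r))"
  using ov_min[OF assms, of "[:-r, 1:]" a] unfolding pcomp_lin T_lin by auto

end

context VQ begin

lemma Phi_all: assumes hyp: "\<forall>r. r \<noteq> a \<longrightarrow> (Q (X a) (cst (r - a)) \<and> Qeq (X r) (X a)) \<or>
      (Q (cst (r - a)) (X a) \<and> Qeq (X r) (cst (r - a)))"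
    and "F \<noteq> 0"
  shows "\<exists>n c. c \<noteq> 0 \<and> Qeq (pfr F) (M a n c) \<and> qeq (dQ a) (omega_val v a (dQ a) F) (n, v c)"
  using assms(2)
proof (induction F rule: split_induct)
  let ?d = "dQ a"
  have d: "?d \<in> Qcuts G" by (rule dQ_Qcuts)
  {
    case (1 c)
    have "Qeq (pfr [:c:]) (M a 0 c)" unfolding M_def using Qeq_refl by (simp add: cst_pfr)
    moreover have "qeq ?d (omega_val v a ?d [:c:]) (0, v c)" using ov_const[OF d \<open>c \<noteq> 0\<close>, of a] qeq_refl by simp
    ultimately show ?case using 1 by blast
  next
    case (2 r)
    have px: "pfr [:-r, 1:] = X r" unfolding X_def ..
    show ?case
    proof (cases "r = a")
      case True
      then have "omega_val v a ?d [:-r, 1:] = (1, 0)" using ov_lin(1)[OF d, of a r] by simp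
      moreover have "M a 1 1 = X r" unfolding M_def using True by simp
      ultimately show ?thesis using px Qeq_refl qeq_refl by (metis one_neq_zero v1)
    next
      case False
      have ra: "r - a \<noteq> 0" using False by simp
      have var: "v (a - r) = v (r - a)" using vsub by blast
      from hyp False show ?thesis
      proof (elim allE[of _ r] impE disjE conjE)
        assume h1: "Q (X a) (cst (r - a))" and h2: "Qeq (X r) (X a)"
        have "v (r - a) \<in> snd ?d" unfolding dQ_def using h1 ra by auto
        then have q10: "qle ?d (1, 0) (0, v (a - r))"
          unfolding qle_def using var by (subst xle_pos) (auto intro!: bexI[of _ "v (r - a)"])
        have "qeq ?d (omega_val v a ?d [:-r, 1:]) (1, 0)"
          using ov_lin[OF d, of a r] False q10 qle_refl unfolding qeq_def by (auto split: if_splits)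
        moreover have "Qeq (pfr [:-r, 1:]) (M a 1 1)" unfolding M_def px using h2 by simp
        ultimately show ?thesis by (metis one_neq_zero v1)
      next
        assume h1: "Q (cst (r - a)) (X a)" and h2: "Qeq (X r) (cst (r - a))"
        have "v (r - a) \<in> fst ?d" unfolding dQ_def using h1 ra by auto
        then have q01: "qle ?d (0, v (a - r)) (1, 0)"
          unfolding qle_def using var by (subst xle_neg) (auto intro!: bexI[of _ "v (r - a)"])
        have "qeq ?d (omega_val v a ?d [:-r, 1:]) (0, v (a - r))"
          using ov_lin[OF d, of a r] False q01 qle_refl unfolding qeq_def by (auto split: if_splits)
        moreover have "Qeq (pfr [:-r, 1:]) (M a 0 (r - a))" unfolding M_def px using h2 by simp
        ultimately show ?thesis using ra var by metis
      qed
    qed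
  next
    case (3 p q)
    obtain n c where nc: "c \<noteq> 0" "Qeq (pfr p) (M a n c)" "qeq ?d (omega_val v a ?d p) (n, v c)"
      using 3 by blast
    obtain m e where me: "e \<noteq> 0" "Qeq (pfr q) (M a m e)" "qeq ?d (omega_val v a ?d q) (m, v e)"
      using 3 by blast
    have "Qeq (pfr (p * q)) (M a (n + m) (c * e))"
      unfolding pfr_mult M_mult[symmetric] using Qeq_mult nc me by blast
    moreover have "qeq ?d (omega_val v a ?d (p * q)) (n + m, v (c * e))"
    proof -
      have "qeq ?d (omega_val v a ?d (p * q)) (padd (omega_val v a ?d p) (omega_val v a ?d q))"
        using ov_mult[OF d 3(1,2)] .
      moreover have "qeq ?d (padd (omega_val v a ?d p) (omega_val v a ?d q)) (padd (n, v c) (m, v e))"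
        using qeq_padd[OF d nc(3) me(3)] .
      moreover have "padd (n, v c) (m, v e) = (n + m, v (c * e))" unfolding padd_def using nc me by (simp add: vmult)
      ultimately show ?thesis using qeq_trans[OF d] by metis
    qed
    moreover have "c * e \<noteq> 0" using nc me by simp
    ultimately show ?case by blast
  }
qed (fact assms(2))

lemma Q_Fract: assumes "f1 \<noteq> 0" "g1 \<noteq> 0" "f2 \<noteq> 0" "g2 \<noteq> 0"
  shows "Q (Fract f1 g1) (Fract f2 g2) \<longleftrightarrow> Q (pfr (f1 * g2)) (pfr (f2 * g1))"
proof -
  have "pfr (g1 * g2) \<noteq> 0" by (intro pfr_nz) (simp add: assms)
  then have "Q (Fract f1 g1) (Fract f2 g2) \<longleftrightarrow> Q (Fract f1 g1 * pfr (g1 * g2)) (Fract f2 g2 * pfr (g1 * g2))"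
    using Qcancel_iff by blast
  then show ?thesis using Fract_cross[of g1 g2 f1] Fract_cross'[of g1 g2 f2] assms by simp
qed

lemma detD: assumes hyp: "\<forall>r. r \<noteq> a \<longrightarrow> (Q (X a) (cst (r - a)) \<and> Qeq (X r) (X a)) \<or>
      (Q (cst (r - a)) (X a) \<and> Qeq (X r) (cst (r - a)))"
  shows "Q = omega v a (dQ a)"
proof (intro ext)
  fix x y :: "'k poly fract"
  let ?d = "dQ a"
  have d: "?d \<in> Qcuts G" by (rule dQ_Qcuts)
  show "Q x y = omega v a ?d x y"
  proof (cases "y = 0")
    case True then show ?thesis using Q0 unfolding omega_def by simp
  next
    case yn: False
    show ?thesis
    proof (cases "x = 0")
      case True then show ?thesis using Q0' yn unfolding omega_def by auto
    next
      case xn: False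
      obtain f1 g1 where x: "x = Fract f1 g1" "g1 \<noteq> 0" "f1 \<noteq> 0" using xn Fract_cases_nonzero by metis
      obtain f2 g2 where y: "y = Fract f2 g2" "g2 \<noteq> 0" "f2 \<noteq> 0" using yn Fract_cases_nonzero by metis
      have nz: "f1 * g2 \<noteq> 0" "f2 * g1 \<noteq> 0" using x y by auto
      obtain n c where nc: "c \<noteq> 0" "Qeq (pfr (f1 * g2)) (M a n c)" "qeq ?d (omega_val v a ?d (f1 * g2)) (n, v c)"
        using Phi_all[OF hyp nz(1)] by blast
      obtain m e where me: "e \<noteq> 0" "Qeq (pfr (f2 * g1)) (M a m e)" "qeq ?d (omega_val v a ?d (f2 * g1)) (m, v e)"
        using Phi_all[OF hyp nz(2)] by blast
      have "Q x y \<longleftrightarrow> Q (pfr (f1 * g2)) (pfr (f2 * g1))" using Q_Fract x y by simp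
      also have "\<dots> \<longleftrightarrow> Q (M a n c) (M a m e)" using Q_cong nc me by blast
      also have "\<dots> \<longleftrightarrow> qle ?d (n, v c) (m, v e)" using sem nc me by blast
      also have "\<dots> \<longleftrightarrow> qle ?d (omega_val v a ?d (f1 * g2)) (omega_val v a ?d (f2 * g1))"
        using qle_cong[OF d] nc me qeq_sym by blast
      also have "\<dots> \<longleftrightarrow> qle ?d (padd (omega_val v a ?d f1) (omega_val v a ?d g2)) (padd (omega_val v a ?d f2) (omega_val v a ?d g1))"
        using qle_cong[OF d ov_mult[OF d] ov_mult[OF d]] x y by simp
      also have "\<dots> \<longleftrightarrow> omega v a ?d x y" using omega_iff[OF d] x y by simp
      finally show ?thesis .
    qed
  qed
qed

end

lemma X_split: "X r = X a + cst (a - r)"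
  unfolding X_def pfr_def cst_def by simp

lemma qc_minf_Q: "qc_minf G \<in> Qcuts G" unfolding qc_minf_def Qcuts_def by auto
lemma qc_inftym_Q: "qc_inftym G \<in> Qcuts G" unfolding qc_inftym_def Qcuts_def by auto

context VF begin

lemma VQ_I: "is_val_class v P \<Longrightarrow> VQ v P"
  unfolding VQ_def VQ_axioms_def using VF_axioms by blast

lemma omega_pc: assumes "\<delta> \<in> Qcuts G" "f \<noteq> 0" "c \<noteq> 0"
  shows "omega v a \<delta> (pfr f) (cst c) \<longleftrightarrow> qle \<delta> (omega_val v a \<delta> f) (0, v c)"
    "omega v a \<delta> (cst c) (pfr f) \<longleftrightarrow> qle \<delta> (0, v c) (omega_val v a \<delta> f)"
proof -
  have o1: "omega_val v a \<delta> 1 = (0, 0)" using ov_const[OF assms(1), of 1 a] by (simp add: one_pCons)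
  show "omega v a \<delta> (pfr f) (cst c) \<longleftrightarrow> qle \<delta> (omega_val v a \<delta> f) (0, v c)"
    unfolding pfr_def cst_def using omega_iff[OF assms(1), of f 1 "[:c:]" 1 a] assms o1 ov_const[OF assms(1) assms(3)]
    by (simp add: qle_padd)
  show "omega v a \<delta> (cst c) (pfr f) \<longleftrightarrow> qle \<delta> (0, v c) (omega_val v a \<delta> f)"
    unfolding pfr_def cst_def using omega_iff[OF assms(1), of "[:c:]" 1 f 1 a] assms o1 ov_const[OF assms(1) assms(3)]
    by (simp add: qle_padd)
qed

lemma omega_pp: assumes "\<delta> \<in> Qcuts G" "f \<noteq> 0" "g \<noteq> 0"
  shows "omega v a \<delta> (pfr f) (pfr g) \<longleftrightarrow> qle \<delta> (omega_val v a \<delta> f) (omega_val v a \<delta> g)"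
proof -
  have o1: "omega_val v a \<delta> 1 = (0, 0)" using ov_const[OF assms(1), of 1 a] by (simp add: one_pCons)
  show ?thesis unfolding pfr_def using omega_iff[OF assms(1), of f 1 g 1 a] assms o1 by (simp add: qle_padd)
qed

lemma ov_minf: "omega_val v a (qc_minf G) [:-r, 1:] = (1, 0)"
proof -
  have d: "qc_minf G \<in> Qcuts G" by (rule qc_minf_Q)
  have "\<not> qle (qc_minf G) (0, \<beta>) (1, 0)" for \<beta>
    unfolding qle_def qc_minf_def by (simp add: xle_neg)
  then show ?thesis using ov_lin[OF d, of a r] by (auto split: if_splits)
qed

lemma minf_below: "c \<noteq> 0 \<Longrightarrow> qle (qc_minf G) (1, 0) (0, v c)"
  unfolding qle_def qc_minf_def using G_v by (auto simp: xle_pos intro!: bexI[of _ "v c"])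
lemma minf_below': "\<not> qle (qc_minf G) (0, \<beta>) (1, 0)"
  unfolding qle_def qc_minf_def by (simp add: xle_neg)

lemma ov_inf_a: "omega_val v a (qc_inftym G) [:-a, 1:] = (1, 0)"
  using ov_lin(1)[OF qc_inftym_Q, of a a] by simp

lemma ov_inf_r: assumes "r \<noteq> a" shows "omega_val v a (qc_inftym G) [:-r, 1:] = (0, v (a - r))"
proof -
  have "\<not> qle (qc_inftym G) (1, 0) (0, v (a - r))"
    unfolding qle_def qc_inftym_def by (simp add: xle_pos)
  then show ?thesis using ov_lin[OF qc_inftym_Q, of a r] assms by (auto split: if_splits)
qed

lemma inf_above: "c \<noteq> 0 \<Longrightarrow> qle (qc_inftym G) (0, v c) (1, 0)"
  unfolding qle_def qc_inftym_def using G_v by (auto simp: xle_neg intro!: bexI[of _ "v c"])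
lemma inf_above': "\<not> qle (qc_inftym G) (1, 0) (0, \<beta>)"
  unfolding qle_def qc_inftym_def by (simp add: xle_pos)

lemma sandwich:
  assumes P: "is_val_class v P" and Q: "is_val_class v Q"
    and lin: "\<And>r. \<exists>c. c \<noteq> 0 \<and> P (X r) (cst c) \<and> Q (cst c) (X r)"
    and "f \<noteq> 0"
  shows "\<exists>c. c \<noteq> 0 \<and> P (pfr f) (cst c) \<and> Q (cst c) (pfr f)"
  using assms(4)
proof (induction f rule: split_induct)
  interpret p: VQ v P by (rule VQ_I[OF P])
  interpret q: VQ v Q by (rule VQ_I[OF Q])
  {
    case (1 c) then show ?case using p.Qrefl q.Qrefl by (auto simp: cst_pfr)
  next
    case (2 r) then show ?case using lin[of r] unfolding X_def by blast
  next
    case (3 f g)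
    then obtain c d where "c \<noteq> 0" "P (pfr f) (cst c)" "Q (cst c) (pfr f)"
      "d \<noteq> 0" "P (pfr g) (cst d)" "Q (cst d) (pfr g)" by blast
    then show ?case using p.Qmono q.Qmono
      by (intro exI[of _ "c * d"]) (auto simp: pfr_mult cst_mult[symmetric])
  }
qed (fact assms(4))

end

context VF begin

lemma X_pfr: "X r = pfr [:-r, 1:]" unfolding X_def ..

lemma minf_eq: "omega v a (qc_minf G) = omega v b (qc_minf G)"
proof -
  let ?Q = "omega v b (qc_minf G)"
  have vcQ: "is_val_class v ?Q" using omega_val_class[OF qc_minf_Q] .
  interpret q: VQ v ?Q by (rule VQ_I[OF vcQ])
  have below: "?Q (X r) (cst c)" if "c \<noteq> 0" for r c
    unfolding X_pfr using omega_pc(1)[OF qc_minf_Q _ that, of "[:-r,1:]" b] ov_minf minf_below[OF that] by simp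
  have notabove: "\<not> ?Q (cst c) (X r)" if "c \<noteq> 0" for r c
    unfolding X_pfr using omega_pc(2)[OF qc_minf_Q _ that, of "[:-r,1:]" b] ov_minf minf_below' by simp
  have eqX: "q.Qeq (X r) (X a)" for r
    unfolding q.Qeq_def X_pfr using omega_pp[OF qc_minf_Q, of "[:-r,1:]" "[:-a,1:]" b]
      omega_pp[OF qc_minf_Q, of "[:-a,1:]" "[:-r,1:]" b] ov_minf qle_refl by simp
  have "?Q = omega v a (q.dQ a)"
    by (rule q.detD) (use below eqX in auto)
  moreover have "q.dQ a = qc_minf G"
  proof -
    have 1: "{v c |c. c \<noteq> 0 \<and> ?Q (cst c) (X a)} = {}" using notabove by auto
    have 2: "{v c |c. c \<noteq> 0 \<and> ?Q (X a) (cst c)} = G"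
    proof
      show "{v c |c. c \<noteq> 0 \<and> ?Q (X a) (cst c)} \<subseteq> G" using G_v by auto
      show "G \<subseteq> {v c |c. c \<noteq> 0 \<and> ?Q (X a) (cst c)}"
      proof
        fix \<gamma> assume "\<gamma> \<in> G"
        then obtain c where c: "c \<noteq> 0" "\<gamma> = v c" using G_E by blast
        then show "\<gamma> \<in> {v c |c. c \<noteq> 0 \<and> ?Q (X a) (cst c)}" using below[OF c(1)] by blast
      qed
    qed
    show ?thesis unfolding q.dQ_def 1 2 by (simp add: qc_minf_def)
  qed
  ultimately show ?thesis by simp
qed

lemma minf_least: assumes P: "is_val_class v P" shows "vle v (omega v a (qc_minf G)) P"
proof -
  interpret p: VQ v P by (rule VQ_I[OF P])
  let ?W = "omega v a (qc_minf G)"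
  show ?thesis
  proof (cases "\<forall>c. c \<noteq> 0 \<longrightarrow> \<not> P (cst c) (X a)")
    case True
    have hyp: "\<forall>r. r \<noteq> a \<longrightarrow> (P (X a) (cst (r - a)) \<and> p.Qeq (X r) (X a)) \<or>
      (P (cst (r - a)) (X a) \<and> p.Qeq (X r) (cst (r - a)))"
    proof (intro allI impI disjI1 conjI)
      fix r assume "r \<noteq> a"
      then have "r - a \<noteq> 0" by simp
      then show "P (X a) (cst (r - a))" using True p.Qtot[of "X a" "cst (r - a)"] by auto
      have "p.Qlt (X a) (cst (a - r))" unfolding p.Qlt_def using True \<open>r \<noteq> a\<close> by auto
      then show "p.Qeq (X r) (X a)" using p.Qstrict X_split[of r a] by simp
    qed
    have "P = omega v a (p.dQ a)" using p.detD[OF hyp] .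
    moreover have "p.dQ a = qc_minf G"
    proof -
      have 1: "{v c |c. c \<noteq> 0 \<and> P (cst c) (X a)} = {}" using True by auto
      have 2: "{v c |c. c \<noteq> 0 \<and> P (X a) (cst c)} = G"
      proof
        show "{v c |c. c \<noteq> 0 \<and> P (X a) (cst c)} \<subseteq> G" using G_v by auto
        show "G \<subseteq> {v c |c. c \<noteq> 0 \<and> P (X a) (cst c)}"
        proof
          fix \<gamma> assume "\<gamma> \<in> G"
          then obtain c where c: "c \<noteq> 0" "\<gamma> = v c" using G_E by blast
          then have "P (X a) (cst c)" using True p.Qtot[of "X a" "cst c"] by blast
          then show "\<gamma> \<in> {v c |c. c \<noteq> 0 \<and> P (X a) (cst c)}" using c by blast
        qed
      qed
      show ?thesis unfolding p.dQ_def 1 2 by (simp add: qc_minf_def)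
    qed
    ultimately show ?thesis unfolding vle_def by simp
  next
    case False
    then obtain c0 where c0: "c0 \<noteq> 0" "P (cst c0) (X a)" by blast
    have W: "is_val_class v ?W" using omega_val_class[OF qc_minf_Q] .
    have below: "?W (X r) (cst c)" if "c \<noteq> 0" for r c
      unfolding X_pfr using omega_pc(1)[OF qc_minf_Q _ that, of "[:-r,1:]" a] ov_minf minf_below[OF that] by simp
    have lin: "\<exists>c. c \<noteq> 0 \<and> ?W (X r) (cst c) \<and> P (cst c) (X r)" for r
    proof (cases "r = a")
      case True then show ?thesis using c0 below by blast
    next
      case False
      define d where "d = (if v c0 \<le> v (a - r) then c0 else a - r)"
      have d0: "d \<noteq> 0" unfolding d_def using c0 False by auto
      have "P (cst d) (X a)"
      proof (cases "v c0 \<le> v (a - r)")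
        case True then show ?thesis unfolding d_def using c0 by simp
      next
        case F: False
        then have "P (cst (a - r)) (cst c0)" using p.Qcst c0 False by simp
        then show ?thesis unfolding d_def using F c0 p.Qtrans by auto
      qed
      moreover have "P (cst d) (cst (a - r))" unfolding d_def using p.Qcst c0 False p.Qrefl by auto
      ultimately have "P (cst d) (X r)" using p.Qadd X_split[of r a] by simp
      then show ?thesis using d0 below by blast
    qed
    have "\<forall>f. f \<noteq> 0 \<longrightarrow> (\<exists>c. c \<noteq> 0 \<and> ?W (pfr f) (cst c) \<and> P (cst c) (pfr f))"
      using sandwich[OF W P lin] by blast
    then show ?thesis unfolding vle_def by blast
  qed
qed

lemma omega_le_inf: assumes d: "\<delta> \<in> Qcuts G" shows "vle v (omega v a \<delta>) (omega v a (qc_inftym G))"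
proof (cases "\<delta> = qc_inftym G")
  case True then show ?thesis unfolding vle_def by simp
next
  case False
  have "snd \<delta> \<noteq> {}"
  proof
    assume "snd \<delta> = {}"
    then have "fst \<delta> = G" using Qcuts_un[OF d] by auto
    then show False using False \<open>snd \<delta> = {}\<close> unfolding qc_inftym_def by (metis prod.collapse)
  qed
  then obtain \<rho> where \<rho>: "\<rho> \<in> snd \<delta>" by blast
  then have "\<rho> \<in> G" using Qcuts_un[OF d] by auto
  then obtain c\<rho> where c\<rho>: "c\<rho> \<noteq> 0" "\<rho> = v c\<rho>" using G_E by blast
  have Pv: "is_val_class v (omega v a \<delta>)" using omega_val_class[OF d] .
  have Wv: "is_val_class v (omega v a (qc_inftym G))" using omega_val_class[OF qc_inftym_Q] .
  have lin: "\<exists>c. c \<noteq> 0 \<and> omega v a \<delta> (X r) (cst c) \<and> omega v a (qc_inftym G) (cst c) (X r)" for r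
  proof (cases "r = a")
    case True
    have "omega_val v a \<delta> [:-a, 1:] = (1, 0)" using ov_lin(1)[OF d, of a a] by simp
    moreover have "qle \<delta> (1, 0) (0, v c\<rho>)" unfolding qle_def using \<rho> c\<rho>
      by (simp add: xle_pos) (metis order_refl)
    ultimately have "omega v a \<delta> (X a) (cst c\<rho>)" unfolding X_pfr using omega_pc(1)[OF d _ c\<rho>(1)] by simp
    moreover have "omega v a (qc_inftym G) (cst c\<rho>) (X a)"
      unfolding X_pfr using omega_pc(2)[OF qc_inftym_Q _ c\<rho>(1)] ov_inf_a inf_above[OF c\<rho>(1)] by simp
    ultimately show ?thesis using True c\<rho> by blast
  next
    case False
    then have ar: "a - r \<noteq> 0" by simp
    have "omega v a \<delta> (X r) (cst (a - r))"
      unfolding X_pfr using omega_pc(1)[OF d _ ar] ov_lin(3)[OF d, of a r] False by simp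
    moreover have "omega v a (qc_inftym G) (cst (a - r)) (X r)"
      unfolding X_pfr using omega_pc(2)[OF qc_inftym_Q _ ar] ov_inf_r[OF False] qle_refl by simp
    ultimately show ?thesis using ar by blast
  qed
  show ?thesis unfolding vle_def using sandwich[OF Pv Wv lin] by blast
qed

lemma inf_maximal: "is_maximal v (omega v a (qc_inftym G))"
  unfolding is_maximal_def
proof (intro conjI allI impI)
  show "is_val_class v (omega v a (qc_inftym G))" using omega_val_class[OF qc_inftym_Q] .
  fix Q assume "is_val_class v Q" "vle v (omega v a (qc_inftym G)) Q"
  moreover have "\<not> omega v a (qc_inftym G) (pfr [:-a, 1:]) (cst c)" if "c \<noteq> 0" for c
    using omega_pc(1)[OF qc_inftym_Q _ that, of "[:-a,1:]" a] ov_inf_a inf_above' by simp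
  ultimately show "Q = omega v a (qc_inftym G)" unfolding vle_def
    by (metis pCons_eq_0_iff zero_neq_one)
qed

end

context VQ begin

lemma interval_char: assumes le: "vle v Q (omega v a (qc_inftym G))"
  shows "\<exists>\<delta>\<in>Qcuts G. Q = omega v a \<delta>"
proof (cases "Q = omega v a (qc_inftym G)")
  case True then show ?thesis using qc_inftym_Q by blast
next
  case False
  let ?W = "omega v a (qc_inftym G)"
  have sw: "\<forall>f. f \<noteq> 0 \<longrightarrow> (\<exists>c. c \<noteq> 0 \<and> Q (pfr f) (cst c) \<and> ?W (cst c) (pfr f))"
    using le False unfolding vle_def by blast
  have cst_sym: "Qeq (cst (r - a)) (cst (a - r))" for r
  proof (cases "r = a")
    case True then show ?thesis using Qeq_refl by simp
  next
    case False then show ?thesis unfolding Qeq_def using Qcst vsub[of r a] by simp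
  qed
  have star: "Q (X r) (cst (r - a))" if "r \<noteq> a" for r
  proof -
    obtain c where c: "c \<noteq> 0" "Q (X r) (cst c)" "?W (cst c) (X r)"
      using sw[rule_format, of "[:-r, 1:]"] unfolding X_pfr by auto
    have "qle (qc_inftym G) (0, v c) (0, v (a - r))"
      using c(3) omega_pc(2)[OF qc_inftym_Q _ c(1), of "[:-r,1:]" a] ov_inf_r[OF that] unfolding X_pfr by simp
    then have "v c \<le> v (r - a)" using vsub[of a r] by (simp add: qle_same)
    then have "Q (cst c) (cst (r - a))" using Qcst c that by simp
    then show ?thesis using c Qtrans by blast
  qed
  have hyp: "\<forall>r. r \<noteq> a \<longrightarrow> (Q (X a) (cst (r - a)) \<and> Qeq (X r) (X a)) \<or>
      (Q (cst (r - a)) (X a) \<and> Qeq (X r) (cst (r - a)))"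
  proof (intro allI impI)
    fix r assume ra: "r \<noteq> a"
    have xs: "X r = X a + cst (a - r)" by (rule X_split)
    show "(Q (X a) (cst (r - a)) \<and> Qeq (X r) (X a)) \<or> (Q (cst (r - a)) (X a) \<and> Qeq (X r) (cst (r - a)))"
    proof (cases "Q (X a) (cst (r - a))")
      case True
      have "Q (X a) (cst (a - r))" using True cst_sym Qtrans unfolding Qeq_def by blast
      then have 1: "Q (X a) (X r)" unfolding xs using Qadd Qrefl by blast
      have 2: "Q (X r) (X a)"
      proof (cases "Qlt (X a) (cst (a - r))")
        case True then show ?thesis unfolding xs using Qstrict Qeq_def by blast
      next
        case F: False
        then have "Q (cst (a - r)) (X a)" unfolding Qlt_def by simp
        then show ?thesis using star[OF ra] cst_sym Qtrans unfolding Qeq_def by blast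
      qed
      show ?thesis using True 1 2 unfolding Qeq_def by blast
    next
      case False
      then have h: "Q (cst (r - a)) (X a)" using Qtot by blast
      have "Q (cst (r - a)) (cst (a - r))" using cst_sym unfolding Qeq_def by blast
      then have "Q (cst (r - a)) (X r)" unfolding xs using h Qadd by blast
      then show ?thesis using h star[OF ra] unfolding Qeq_def by blast
    qed
  qed
  show ?thesis using detD[OF hyp] dQ_Qcuts by blast
qed

end

context VF begin

lemma part_iii: "{Q. is_val_class v Q \<and> vle v (omega v a (qc_minf G)) Q \<and> vle v Q (omega v a (qc_inftym G))}
         = {omega v a \<delta> | \<delta>. \<delta> \<in> Qcuts G}"
proof
  show "{Q. is_val_class v Q \<and> vle v (omega v a (qc_minf G)) Q \<and> vle v Q (omega v a (qc_inftym G))}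
      \<subseteq> {omega v a \<delta> | \<delta>. \<delta> \<in> Qcuts G}"
  proof
    fix Q assume "Q \<in> {Q. is_val_class v Q \<and> vle v (omega v a (qc_minf G)) Q \<and> vle v Q (omega v a (qc_inftym G))}"
    then have h: "is_val_class v Q" "vle v Q (omega v a (qc_inftym G))" by auto
    interpret q: VQ v Q by (rule VQ_I[OF h(1)])
    show "Q \<in> {omega v a \<delta> | \<delta>. \<delta> \<in> Qcuts G}" using q.interval_char[OF h(2)] by blast
  qed
  show "{omega v a \<delta> | \<delta>. \<delta> \<in> Qcuts G}
      \<subseteq> {Q. is_val_class v Q \<and> vle v (omega v a (qc_minf G)) Q \<and> vle v Q (omega v a (qc_inftym G))}"
    using omega_val_class minf_least omega_val_class omega_le_inf by blast
qed

end

context VF begin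

lemma qelem_Q: "\<gamma> \<in> G \<Longrightarrow> qc_elem G \<gamma> \<in> Qcuts G"
  unfolding qc_elem_def Qcuts_def by auto

definition ev :: "'g \<Rightarrow> nat \<times> 'g \<Rightarrow> 'g" where "ev \<gamma> s = gmul (fst s) \<gamma> + snd s"

lemma xle_elem_pos: "\<gamma> \<in> G \<Longrightarrow> k > 0 \<Longrightarrow> xle (qc_elem G \<gamma>) (int k) \<beta> \<longleftrightarrow> gmul k \<gamma> \<le> \<beta>"
  unfolding qc_elem_def using gmul_mono by (subst xle_pos) (auto intro: order_trans)
lemma xle_elem_neg: "\<gamma> \<in> G \<Longrightarrow> k > 0 \<Longrightarrow> xle (qc_elem G \<gamma>) (- int k) \<beta> \<longleftrightarrow> - \<beta> \<le> gmul k \<gamma>"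
  unfolding qc_elem_def using gmul_mono by (subst xle_neg) (auto intro: order_trans)

lemma qle_elem: assumes "\<gamma> \<in> G" shows "qle (qc_elem G \<gamma>) s t \<longleftrightarrow> ev \<gamma> s \<le> ev \<gamma> t"
proof -
  obtain n \<beta> m \<beta>' where st: "s = (n, \<beta>)" "t = (m, \<beta>')" by (cases s, cases t)
  consider "n = m" | "n > m" | "n < m" by linarith
  then show ?thesis
  proof cases
    case 1 then show ?thesis unfolding ev_def st by (simp add: qle_same)
  next
    case 2
    then obtain k where k: "n = m + k" "k > 0" by (metis less_imp_add_positive)
    have "int n - int m = int k" using k by simp
    then have "qle (qc_elem G \<gamma>) s t \<longleftrightarrow> gmul k \<gamma> \<le> \<beta>' - \<beta>"
      unfolding qle_def st using xle_elem_pos[OF assms k(2)] by simp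
    also have "\<dots> \<longleftrightarrow> ev \<gamma> s \<le> ev \<gamma> t"
      unfolding ev_def st k by (simp add: gmul_add_n algebra_simps le_diff_eq)
    finally show ?thesis .
  next
    case 3
    then obtain k where k: "m = n + k" "k > 0" by (metis less_imp_add_positive)
    have "int n - int m = - int k" using k by simp
    then have "qle (qc_elem G \<gamma>) s t \<longleftrightarrow> - (\<beta>' - \<beta>) \<le> gmul k \<gamma>"
      unfolding qle_def st using xle_elem_neg[OF assms k(2)] by simp
    also have "\<dots> \<longleftrightarrow> ev \<gamma> s \<le> ev \<gamma> t"
      unfolding ev_def st k by (simp add: gmul_add_n algebra_simps le_diff_eq)
    finally show ?thesis .
  qed
qed

lemma ev_padd: "ev \<gamma> (padd s t) = ev \<gamma> s + ev \<gamma> t"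
  unfolding ev_def padd_def by (simp add: gmul_add_n algebra_simps)

lemma wval_ev: assumes g: "\<gamma> \<in> G" and f: "f \<noteq> 0"
  shows "wval v a \<gamma> f = ev \<gamma> (omega_val v a (qc_elem G \<gamma>) f)"
proof -
  let ?d = "qc_elem G \<gamma>"
  let ?S = "{v (tcoeff a f n) + gmul n \<gamma> | n. tcoeff a f n \<noteq> 0}"
  have mn: "omega_val v a ?d f \<in> T (Pa a f)" "\<forall>s\<in>T (Pa a f). qle ?d (omega_val v a ?d f) s"
    using ov_min[OF qelem_Q[OF g] f] by auto
  have S: "?S = ev \<gamma> ` T (Pa a f)"
    unfolding T_def ev_def tcoeff_def by (auto simp: add.commute image_iff)
  have "finite ?S" unfolding S using T_finite by blast
  moreover have "ev \<gamma> (omega_val v a ?d f) \<in> ?S" unfolding S using mn by blast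
  moreover have "\<forall>y\<in>?S. ev \<gamma> (omega_val v a ?d f) \<le> y" unfolding S using mn qle_elem[OF g] by blast
  ultimately show ?thesis unfolding wval_def by (intro Min_eqI) auto
qed

lemma ev_qeq: "\<gamma> \<in> G \<Longrightarrow> qeq (qc_elem G \<gamma>) s t \<Longrightarrow> ev \<gamma> s = ev \<gamma> t"
  unfolding qeq_def using qle_elem by (meson antisym)

lemma wval_mult: assumes "\<gamma> \<in> G" "f \<noteq> 0" "g \<noteq> 0"
  shows "wval v a \<gamma> (f * g) = wval v a \<gamma> f + wval v a \<gamma> g"
  using wval_ev[OF assms(1)] assms ev_qeq[OF assms(1) ov_mult[OF qelem_Q[OF assms(1)] assms(2,3)]]
  by (simp add: ev_padd)

lemma wval_add: assumes "\<gamma> \<in> G" "f \<noteq> 0" "g \<noteq> 0" "f + g \<noteq> 0"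
  shows "min (wval v a \<gamma> f) (wval v a \<gamma> g) \<le> wval v a \<gamma> (f + g)"
  using wval_ev[OF assms(1)] assms ov_add[OF qelem_Q[OF assms(1)] assms(2-4), of a] qle_elem[OF assms(1)]
  by (auto simp: min_def)

lemma wval_const: "\<gamma> \<in> G \<Longrightarrow> c \<noteq> 0 \<Longrightarrow> wval v a \<gamma> [:c:] = v c"
  using wval_ev ov_const[OF qelem_Q] unfolding ev_def by simp

lemma wval_lin: assumes "\<gamma> \<in> G"
  shows "wval v a \<gamma> [:-r, 1:] = (if r = a then \<gamma> else min \<gamma> (v (a - r)))"
proof -
  let ?d = "qc_elem G \<gamma>"
  have w: "wval v a \<gamma> [:-r, 1:] = ev \<gamma> (omega_val v a ?d [:-r, 1:])" using wval_ev[OF assms] by simp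
  have e1: "ev \<gamma> (1, 0) = \<gamma>" and e0: "ev \<gamma> (0, \<beta>) = \<beta>" for \<beta> unfolding ev_def by simp_all
  note L = ov_lin[OF qelem_Q[OF assms], of a r]
  show ?thesis
  proof (cases "r = a")
    case True then show ?thesis using L(1) w e1 by simp
  next
    case False
    have "ev \<gamma> (omega_val v a ?d [:-r, 1:]) \<le> \<gamma>" using L(2) qle_elem[OF assms] e1 by metis
    moreover have "ev \<gamma> (omega_val v a ?d [:-r, 1:]) \<le> v (a - r)" using L(3) False qle_elem[OF assms] e0 by metis
    moreover have "ev \<gamma> (omega_val v a ?d [:-r, 1:]) = \<gamma> \<or> ev \<gamma> (omega_val v a ?d [:-r, 1:]) = v (a - r)"
      using L(1) False e1 e0 by auto
    ultimately show ?thesis using w False by (auto simp: min_def)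
  qed
qed

end

context VF begin

abbreviation ball :: "'k \<times> 'g \<Rightarrow> 'k set" where "ball p \<equiv> cball v (fst p) (snd p)"
abbreviation wv :: "'k \<times> 'g \<Rightarrow> 'k poly \<Rightarrow> 'g" where "wv p f \<equiv> wval v (fst p) (snd p) f"

lemma ball_center: "fst p \<in> ball p" unfolding cball_def by simp

lemma nest_chain: assumes "is_nest v N" "p \<in> N" "q \<in> N" shows "ball p \<subseteq> ball q \<or> ball q \<subseteq> ball p"
proof (cases "p = q")
  case False
  have "\<forall>p\<in>N. \<forall>q\<in>N. p \<noteq> q \<longrightarrow> ball p \<subset> ball q \<or> ball q \<subset> ball p"
    using assms(1) unfolding is_nest_def by blast
  then have "ball p \<subset> ball q \<or> ball q \<subset> ball p" using assms False by blast
  then show ?thesis by blast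
qed simp
lemma nest_G: "is_nest v N \<Longrightarrow> p \<in> N \<Longrightarrow> snd p \<in> G"
  unfolding is_nest_def by auto
lemma nest_ne: "is_nest v N \<Longrightarrow> N \<noteq> {}"
  unfolding is_nest_def by auto
lemma nest_out: "is_nest v N \<Longrightarrow> \<exists>p\<in>N. c \<notin> ball p"
  unfolding is_nest_def by auto

definition stab :: "('k \<times> 'g) set \<Rightarrow> 'k poly \<Rightarrow> 'k \<times> 'g \<Rightarrow> bool" where
  "stab N F B \<longleftrightarrow> B \<in> N \<and> (\<forall>p\<in>N. (ball p \<subseteq> ball B \<longrightarrow> wv p F = wv B F) \<and>
      (ball B \<subseteq> ball p \<longrightarrow> wv p F \<le> wv B F))"

lemma stab_le: assumes "is_nest v N" "stab N F B" "p \<in> N" shows "wv p F \<le> wv B F"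
proof -
  have B: "B \<in> N" and st: "\<forall>p\<in>N. (ball p \<subseteq> ball B \<longrightarrow> wv p F = wv B F) \<and> (ball B \<subseteq> ball p \<longrightarrow> wv p F \<le> wv B F)"
    using assms(2) unfolding stab_def by blast+
  from nest_chain[OF assms(1) assms(3) B] show ?thesis
  proof
    assume "ball p \<subseteq> ball B" then show ?thesis using st assms(3) by simp
  next
    assume "ball B \<subseteq> ball p" then show ?thesis using st assms(3) by blast
  qed
qed

lemma stab_shrink: assumes N: "is_nest v N" and s: "stab N F B" and p: "p \<in> N" "ball p \<subseteq> ball B"
  shows "stab N F p"
proof -
  have B: "B \<in> N" and st: "\<forall>p\<in>N. (ball p \<subseteq> ball B \<longrightarrow> wv p F = wv B F) \<and> (ball B \<subseteq> ball p \<longrightarrow> wv p F \<le> wv B F)"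
    using s unfolding stab_def by blast+
  have e: "wv p F = wv B F" using st p by blast
  have "\<forall>q\<in>N. (ball q \<subseteq> ball p \<longrightarrow> wv q F = wv p F) \<and> (ball p \<subseteq> ball q \<longrightarrow> wv q F \<le> wv p F)"
  proof (intro ballI conjI impI)
    fix q assume q: "q \<in> N"
    { assume "ball q \<subseteq> ball p"
      then have "ball q \<subseteq> ball B" using p(2) by (rule subset_trans)
      then show "wv q F = wv p F" using st q e by simp }
    { assume "ball p \<subseteq> ball q"
      show "wv q F \<le> wv p F" using stab_le[OF N s q] e by simp }
  qed
  then show ?thesis unfolding stab_def using p by blast
qed

lemma stab_const: assumes N: "is_nest v N" "c \<noteq> 0" "B \<in> N" shows "stab N [:c:] B"
proof -
  have "wv p [:c:] = v c" if "p \<in> N" for p using wval_const[OF nest_G[OF N(1) that] N(2)] .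
  then show ?thesis unfolding stab_def using N(3) by simp
qed

lemma wv_lin_out: assumes "snd p \<in> G" "r \<notin> ball p" shows "wv p [:-r, 1:] = v (fst p - r)"
proof -
  have "r \<noteq> fst p" "v (r - fst p) < snd p" using assms(2) unfolding cball_def by auto
  then show ?thesis using wval_lin[OF assms(1), of "fst p" r] vsub[of r "fst p"] by simp
qed

lemma stab_lin: assumes N: "is_nest v N" and B: "B \<in> N" and r: "r \<notin> ball B"
  shows "stab N [:-r, 1:] B"
  unfolding stab_def
proof (intro conjI ballI impI)
  show "B \<in> N" by fact
  obtain b0 \<gamma>0 where B0: "B = (b0, \<gamma>0)" by (cases B)
  have g0: "\<gamma>0 \<in> G" using nest_G[OF N B] B0 by simp
  have rb0: "r \<noteq> b0" "v (b0 - r) < \<gamma>0" using r unfolding B0 cball_def using vsub[of r b0] by auto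
  have wB: "wv B [:-r, 1:] = v (b0 - r)" using wv_lin_out[of B r] g0 r B0 by simp
  fix p assume p: "p \<in> N"
  obtain b \<gamma> where P0: "p = (b, \<gamma>)" by (cases p)
  have g: "\<gamma> \<in> G" using nest_G[OF N p] P0 by simp
  { assume sub: "ball p \<subseteq> ball B"
    then have "r \<notin> ball p" using r by blast
    then have wp: "wv p [:-r, 1:] = v (b - r)" using wv_lin_out[of p r] g P0 by simp
    have "b \<in> ball B" using sub ball_center[of p] P0 by auto
    then have bb: "b = b0 \<or> \<gamma>0 \<le> v (b - b0)" unfolding B0 cball_def by auto
    show "wv p [:-r, 1:] = wv B [:-r, 1:]"
    proof (cases "b = b0")
      case True then show ?thesis using wp wB by simp
    next
      case False
      then have h: "\<gamma>0 \<le> v (b - b0)" using bb by simp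
      have "b - b0 \<noteq> 0" using False by simp
      moreover have "b0 - r \<noteq> 0" using rb0 by simp
      ultimately have "v ((b - b0) + (b0 - r)) = v (b0 - r)"
        using vstrict'[of "b - b0" "b0 - r"] h rb0 by simp
      then show ?thesis using wp wB by simp
    qed }
  { assume sup: "ball B \<subseteq> ball p"
    have "b0 \<in> ball p" using sup ball_center[of B] B0 by auto
    then have b0p: "b0 = b \<or> \<gamma> \<le> v (b0 - b)" unfolding P0 cball_def by auto
    show "wv p [:-r, 1:] \<le> wv B [:-r, 1:]"
    proof (cases "r = b")
      case True
      then have "wv p [:-r, 1:] = \<gamma>" using wval_lin[OF g, of b r] P0 by simp
      moreover have "\<gamma> \<le> v (b0 - b)" using b0p rb0 True by auto
      ultimately show ?thesis using wB True by simp
    next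
      case False
      have wp: "wv p [:-r, 1:] = min \<gamma> (v (b - r))" using wval_lin[OF g, of b r] P0 False by simp
      show ?thesis
      proof (cases "b0 = b")
        case True then show ?thesis using wp wB by simp
      next
        case F2: False
        have "min \<gamma> (v (b - r)) \<le> v ((b0 - b) + (b - r))"
        proof -
          have "min \<gamma> (v (b - r)) \<le> v (b0 - b)" using b0p F2 by (auto simp: min_def)
          then show ?thesis using vultra'[of "b0 - b" "b - r" "min \<gamma> (v (b - r))"] F2 False rb0 by auto
        qed
        then show ?thesis using wp wB by simp
      qed
    qed }
qed

lemma smaller: assumes "is_nest v N" "B1 \<in> N" "B2 \<in> N"
  obtains B where "B \<in> N" "ball B \<subseteq> ball B1" "ball B \<subseteq> ball B2"
proof -
  from nest_chain[OF assms] show thesis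
  proof
    assume "ball B1 \<subseteq> ball B2" then show thesis using that[of B1] assms by blast
  next
    assume "ball B2 \<subseteq> ball B1" then show thesis using that[of B2] assms by blast
  qed
qed

lemma stab_in: "stab N F B \<Longrightarrow> B \<in> N" unfolding stab_def by blast

lemma stab_mult: assumes N: "is_nest v N" and f: "f \<noteq> 0" and g: "g \<noteq> 0"
    and sf: "stab N f B1" and sg: "stab N g B2"
  shows "\<exists>B. stab N (f * g) B"
proof -
  obtain B where B: "B \<in> N" "ball B \<subseteq> ball B1" "ball B \<subseteq> ball B2"
    using smaller[OF N stab_in[OF sf] stab_in[OF sg]] .
  have sf': "stab N f B" using stab_shrink[OF N sf B(1,2)] .
  have sg': "stab N g B" using stab_shrink[OF N sg B(1,3)] .
  have "stab N (f * g) B"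
    unfolding stab_def
  proof (intro conjI ballI impI)
    show "B \<in> N" by fact
    fix p assume p: "p \<in> N"
    have gp: "snd p \<in> G" "snd B \<in> G" using nest_G[OF N] p B by auto
    have m: "wv p (f * g) = wv p f + wv p g" "wv B (f * g) = wv B f + wv B g"
      using wval_mult[OF gp(1) f g] wval_mult[OF gp(2) f g] by simp_all
    { assume pb: "ball p \<subseteq> ball B"
      have "wv p f = wv B f" using sf' p pb unfolding stab_def by blast
      moreover have "wv p g = wv B g" using sg' p pb unfolding stab_def by blast
      ultimately show "wv p (f * g) = wv B (f * g)" using m by simp }
    { assume "ball B \<subseteq> ball p"
      show "wv p (f * g) \<le> wv B (f * g)" using stab_le[OF N sf' p] stab_le[OF N sg' p] m
        by (simp add: add_mono) }
  qed
  then show ?thesis by blast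
qed

lemma stab_all: assumes N: "is_nest v N" and "F \<noteq> 0" shows "\<exists>B. stab N F B"
  using assms(2)
proof (induction F rule: split_induct)
  { case (1 c) then show ?case using stab_const[OF N] nest_ne[OF N] by blast
  next
    case (2 r)
    obtain B where "B \<in> N" "r \<notin> ball B" using nest_out[OF N] by blast
    then show ?case using stab_lin[OF N] by blast
  next
    case (3 f g) then show ?case using stab_mult[OF N] by blast }
qed (fact assms(2))

lemma wnest_stab: assumes N: "is_nest v N" and s: "stab N F B" shows "wnest v N F = wv B F"
  unfolding wnest_def
proof (rule Greatest_equality)
  obtain b g where "B = (b, g)" by (cases B)
  then show "wv B F \<in> {wval v a \<gamma> F |a \<gamma>. (a, \<gamma>) \<in> N}" using stab_in[OF s] by auto
  fix y assume "y \<in> {wval v a \<gamma> F |a \<gamma>. (a, \<gamma>) \<in> N}"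
  then obtain a \<gamma> where "y = wval v a \<gamma> F" "(a, \<gamma>) \<in> N" by blast
  then show "y \<le> wv B F" using stab_le[OF N s, of "(a, \<gamma>)"] by simp
qed

lemma wnest_const: assumes N: "is_nest v N" "c \<noteq> 0" shows "wnest v N [:c:] = v c"
proof -
  obtain B where B: "B \<in> N" using nest_ne[OF N(1)] by blast
  then show ?thesis using wnest_stab[OF N(1) stab_const[OF N B]] wval_const[OF nest_G[OF N(1) B] N(2)] by simp
qed

lemma wnest_mult: assumes N: "is_nest v N" and f: "f \<noteq> 0" and g: "g \<noteq> 0"
  shows "wnest v N (f * g) = wnest v N f + wnest v N g"
proof -
  have fg: "f * g \<noteq> 0" using f g by simp
  obtain B1 where s1: "stab N f B1" using stab_all[OF N f] by blast
  obtain B2 where s2: "stab N g B2" using stab_all[OF N g] by blast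
  obtain B3 where s3: "stab N (f * g) B3" using stab_all[OF N fg] by blast
  note s = s1 s2 s3
  obtain B' where B': "B' \<in> N" "ball B' \<subseteq> ball B1" "ball B' \<subseteq> ball B2"
    using smaller[OF N stab_in[OF s1] stab_in[OF s2]] .
  obtain B where B: "B \<in> N" "ball B \<subseteq> ball B'" "ball B \<subseteq> ball B3"
    using smaller[OF N B'(1) stab_in[OF s3]] .
  have "stab N f B" "stab N g B" "stab N (f * g) B"
    using stab_shrink[OF N s(1) B(1)] stab_shrink[OF N s(2) B(1)] stab_shrink[OF N s(3) B(1,3)] B B' by auto
  then show ?thesis using wnest_stab[OF N] wval_mult nest_G[OF N B(1)] f g by simp
qed

lemma wnest_add: assumes N: "is_nest v N" and f: "f \<noteq> 0" and g: "g \<noteq> 0" and fg: "f + g \<noteq> 0"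
  shows "wnest v N f \<le> wnest v N (f + g) \<or> wnest v N g \<le> wnest v N (f + g)"
proof -
  obtain B1 where s1: "stab N f B1" using stab_all[OF N f] by blast
  obtain B2 where s2: "stab N g B2" using stab_all[OF N g] by blast
  obtain B3 where s3: "stab N (f + g) B3" using stab_all[OF N fg] by blast
  note s = s1 s2 s3
  obtain B where B: "B \<in> N" "ball B \<subseteq> ball B1" "ball B \<subseteq> ball B2"
    using smaller[OF N stab_in[OF s1] stab_in[OF s2]] .
  have sB: "stab N f B" "stab N g B" using stab_shrink[OF N s(1) B(1,2)] stab_shrink[OF N s(2) B(1,3)] .
  have "wv B (f + g) \<le> wnest v N (f + g)" using stab_le[OF N s(3) B(1)] wnest_stab[OF N s(3)] by simp
  moreover have "min (wv B f) (wv B g) \<le> wv B (f + g)" using wval_add nest_G[OF N B(1)] f g fg by blast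
  ultimately show ?thesis using wnest_stab[OF N sB(1)] wnest_stab[OF N sB(2)] by (auto simp: min_def split: if_splits)
qed

lemma omegaB_fval: assumes N: "is_nest v N" shows "fval (+) (\<le>) UNIV (wnest v N) v"
proof (unfold_locales)
  show "s \<le> s" for s :: 'g by simp
  show "s \<le> t \<Longrightarrow> t \<le> u \<Longrightarrow> s \<le> u" for s t u :: 'g by simp
  show "s \<le> t \<or> t \<le> s" for s t :: 'g by auto
  show "(s + u \<le> t + u) = (s \<le> t)" for s t u :: 'g by simp
  show "s + t \<in> UNIV" for s t :: 'g by simp
  show "wnest v N f \<in> UNIV" for f by simp
  show "f \<noteq> 0 \<Longrightarrow> g \<noteq> 0 \<Longrightarrow> wnest v N (f * g) \<le> wnest v N f + wnest v N g" for f g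
    using wnest_mult[OF N] by simp
  show "f \<noteq> 0 \<Longrightarrow> g \<noteq> 0 \<Longrightarrow> wnest v N f + wnest v N g \<le> wnest v N (f * g)" for f g
    using wnest_mult[OF N] by simp
  show "f \<noteq> 0 \<Longrightarrow> g \<noteq> 0 \<Longrightarrow> f + g \<noteq> 0 \<Longrightarrow> wnest v N f \<le> wnest v N (f + g) \<or> wnest v N g \<le> wnest v N (f + g)" for f g
    using wnest_add[OF N] by blast
  show "c \<noteq> 0 \<Longrightarrow> d \<noteq> 0 \<Longrightarrow> (wnest v N [:c:] \<le> wnest v N [:d:]) = (v c \<le> v d)" for c d
    using wnest_const[OF N] by simp
qed

lemma omegaB_val_class: "is_nest v N \<Longrightarrow> is_val_class v (omegaB v N)"
  unfolding omegaB_FR using fval.R_val_class[OF omegaB_fval] by blast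

lemma omegaB_iff: assumes "is_nest v N" "f1 \<noteq> 0" "g1 \<noteq> 0" "f2 \<noteq> 0" "g2 \<noteq> 0"
  shows "omegaB v N (Fract f1 g1) (Fract f2 g2) \<longleftrightarrow> wnest v N f1 + wnest v N g2 \<le> wnest v N f2 + wnest v N g1"
  unfolding omegaB_FR using fval.R_iff[OF omegaB_fval[OF assms(1)]] assms(2-) by blast

end

lemma X_diff: "X c - X b = cst (b - c)"
  unfolding X_def pfr_def cst_def by simp

context VF begin

lemma wnest_ge: assumes N: "is_nest v N" "p \<in> N" "f \<noteq> 0" shows "wv p f \<le> wnest v N f"
proof -
  obtain B where "stab N f B" using stab_all[OF N(1) N(3)] by blast
  then show ?thesis using stab_le[OF N(1) _ N(2)] wnest_stab[OF N(1)] by simp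
qed

lemma wnest_lin_out: assumes N: "is_nest v N" "B \<in> N" "r \<notin> ball B"
  shows "wnest v N [:-r, 1:] = v (fst B - r)"
  using wnest_stab[OF N(1) stab_lin[OF N]] wv_lin_out[OF nest_G[OF N(1,2)] N(3)] by simp

lemma wnest1: "is_nest v N \<Longrightarrow> wnest v N 1 = 0"
  using wnest_const[of N 1] by (simp add: one_pCons)

lemma omegaB_pc: assumes N: "is_nest v N" and "f \<noteq> 0" "c \<noteq> 0"
  shows "omegaB v N (pfr f) (cst c) \<longleftrightarrow> wnest v N f \<le> v c"
    "omegaB v N (cst c) (pfr f) \<longleftrightarrow> v c \<le> wnest v N f"
  unfolding pfr_def cst_def
  using omegaB_iff[OF N, of f 1 "[:c:]" 1] omegaB_iff[OF N, of "[:c:]" 1 f 1] assms wnest1[OF N]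
    wnest_const[OF N assms(3)] by simp_all

end

context VQ begin

lemma cst_sym: "Qeq (cst (r - a)) (cst (a - r))"
proof (cases "r = a")
  case True then show ?thesis using Qeq_refl by simp
next
  case False then show ?thesis unfolding Qeq_def using Qcst vsub[of r a] by simp
qed

lemma Qlt_diff: assumes "Qlt x y" shows "Qeq (x - y) x"
proof -
  have "Qlt x (- y)" using assms Qneg[of y] unfolding Qlt_def Qeq_def using Qtrans by blast
  then have "Qeq (x + - y) x" using Qstrict by blast
  then show ?thesis by simp
qed

lemma gamma_det: assumes N: "is_nest v N"
  and hyp: "\<And>r. \<exists>c. c \<noteq> 0 \<and> Qeq (X r) (cst c) \<and> wnest v N [:-r, 1:] = v c"
  shows "Q = omegaB v N"
proof -
  have Phi: "\<exists>c. c \<noteq> 0 \<and> Qeq (pfr F) (cst c) \<and> wnest v N F = v c" if "F \<noteq> 0" for F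
    using that
  proof (induction F rule: split_induct)
    { case (1 c) then show ?case using Qeq_refl wnest_const[OF N] by (auto simp: cst_pfr)
    next
      case (2 r) then show ?case using hyp[of r] unfolding X_def by blast
    next
      case (3 f g)
      then obtain c d where "c \<noteq> 0" "Qeq (pfr f) (cst c)" "wnest v N f = v c"
        "d \<noteq> 0" "Qeq (pfr g) (cst d)" "wnest v N g = v d" by blast
      then show ?case using Qeq_mult wnest_mult[OF N 3(1,2)] vmult
        by (intro exI[of _ "c * d"]) (auto simp: pfr_mult cst_mult[symmetric]) }
  qed (fact that)
  show ?thesis
  proof (intro ext)
    fix x y :: "'k poly fract"
    show "Q x y = omegaB v N x y"
    proof (cases "y = 0")
      case True then show ?thesis using Q0 unfolding omegaB_def by simp
    next
      case yn: False
      show ?thesis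
      proof (cases "x = 0")
        case True then show ?thesis using Q0' yn unfolding omegaB_def by auto
      next
        case xn: False
        obtain f1 g1 where x: "x = Fract f1 g1" "g1 \<noteq> 0" "f1 \<noteq> 0" using xn Fract_cases_nonzero by metis
        obtain f2 g2 where y: "y = Fract f2 g2" "g2 \<noteq> 0" "f2 \<noteq> 0" using yn Fract_cases_nonzero by metis
        have nz: "f1 * g2 \<noteq> 0" "f2 * g1 \<noteq> 0" using x y by auto
        obtain c where c: "c \<noteq> 0" "Qeq (pfr (f1 * g2)) (cst c)" "wnest v N (f1 * g2) = v c"
          using Phi[OF nz(1)] by blast
        obtain d where d: "d \<noteq> 0" "Qeq (pfr (f2 * g1)) (cst d)" "wnest v N (f2 * g1) = v d"
          using Phi[OF nz(2)] by blast
        have "Q x y \<longleftrightarrow> Q (pfr (f1 * g2)) (pfr (f2 * g1))" using Q_Fract x y by simp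
        also have "\<dots> \<longleftrightarrow> Q (cst c) (cst d)" using Q_cong c d by blast
        also have "\<dots> \<longleftrightarrow> v c \<le> v d" using Qcst c d by blast
        also have "\<dots> \<longleftrightarrow> wnest v N f1 + wnest v N g2 \<le> wnest v N f2 + wnest v N g1"
          using c d wnest_mult[OF N] x y by (simp add: add.commute)
        also have "\<dots> \<longleftrightarrow> omegaB v N x y" using omegaB_iff[OF N] x y by simp
        finally show ?thesis .
      qed
    qed
  qed
qed

end

context VF begin

lemma omegaB_maximal: assumes N: "is_nest v N" shows "is_maximal v (omegaB v N)"
  unfolding is_maximal_def
proof (intro conjI allI impI)
  show vcB: "is_val_class v (omegaB v N)" using omegaB_val_class[OF N] .
  fix Q assume Q: "is_val_class v Q" and le: "vle v (omegaB v N) Q"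
  interpret q: VQ v Q by (rule VQ_I[OF Q])
  show "Q = omegaB v N"
  proof (cases "omegaB v N = Q")
    case True then show ?thesis by simp
  next
    case False
    then have sw: "\<forall>f. f \<noteq> 0 \<longrightarrow> (\<exists>c. c \<noteq> 0 \<and> omegaB v N (pfr f) (cst c) \<and> Q (cst c) (pfr f))"
      using le unfolding vle_def by blast
    have hyp: "\<exists>c. c \<noteq> 0 \<and> q.Qeq (X r) (cst c) \<and> wnest v N [:-r, 1:] = v c" for r
    proof -
      obtain B where B: "B \<in> N" "r \<notin> ball B" using nest_out[OF N] by blast
      obtain b0 \<gamma>0 where B0: "B = (b0, \<gamma>0)" by (cases B)
      have g0: "\<gamma>0 \<in> G" using nest_G[OF N B(1)] B0 by simp
      have wr: "wnest v N [:-r, 1:] = v (b0 - r)" using wnest_lin_out[OF N B] B0 by simp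
      have rb: "r \<noteq> b0" "v (b0 - r) < \<gamma>0" using B(2) B0 vsub[of r b0] unfolding cball_def by auto
      have "\<gamma>0 \<le> wnest v N [:-b0, 1:]"
        using wnest_ge[OF N B(1), of "[:-b0, 1:]"] wval_lin[OF g0, of b0 b0] B0 by simp
      obtain c where c: "c \<noteq> 0" "omegaB v N (pfr [:-b0, 1:]) (cst c)" "Q (cst c) (X b0)"
        using sw[rule_format, of "[:-b0, 1:]"] unfolding X_pfr by auto
      have "wnest v N [:-b0, 1:] \<le> v c" using c(2) omegaB_pc(1)[OF N _ c(1)] by simp
      then have lt: "v (b0 - r) < v c" using rb \<open>\<gamma>0 \<le> _\<close> by simp
      have ne: "b0 - r \<noteq> 0" using rb by simp
      have "q.Qlt (cst (b0 - r)) (X b0)"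
        unfolding q.Qlt_def
      proof
        assume "Q (X b0) (cst (b0 - r))"
        then have "Q (cst c) (cst (b0 - r))" using c q.Qtrans by blast
        then show False using q.Qcst c ne lt by simp
      qed
      then have "q.Qeq (X r) (cst (b0 - r))" using q.Qstrict' X_split[of r b0] by simp
      then show ?thesis using ne wr by blast
    qed
    show ?thesis using q.gamma_det[OF N hyp] .
  qed
qed

lemma wnest_G: assumes N: "is_nest v N" "f \<noteq> 0" shows "wnest v N f \<in> G"
proof -
  obtain B where s: "stab N f B" using stab_all[OF N] by blast
  have g: "snd B \<in> G" using nest_G[OF N(1) stab_in[OF s]] .
  have "wv B f = ev (snd B) (omega_val v (fst B) (qc_elem G (snd B)) f)" using wval_ev[OF g N(2)] .
  moreover have "snd (omega_val v (fst B) (qc_elem G (snd B)) f) \<in> G" using ov_G[OF qelem_Q[OF g] N(2)] .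
  ultimately have "wv B f \<in> G" unfolding ev_def using G_add G_gmul g by simp
  then show ?thesis using wnest_stab[OF N(1) s] by simp
qed

lemma disjoint: "{omegaB v N | N. is_nest v N} \<inter> {omega v a (qc_inftym G) | a. True} = {}"
proof (rule ccontr)
  assume "\<not> ?thesis"
  then obtain P where "P \<in> {omegaB v N | N. is_nest v N}" "P \<in> {omega v a (qc_inftym G) | a. True}" by blast
  then obtain N a where N: "is_nest v N" and e: "omegaB v N = omega v a (qc_inftym G)" by blast
  have "wnest v N [:-a, 1:] \<in> G" using wnest_G[OF N] by simp
  then obtain c where c: "c \<noteq> 0" "wnest v N [:-a, 1:] = v c" using G_E by metis
  have "omegaB v N (pfr [:-a, 1:]) (cst c)" using omegaB_pc(1)[OF N _ c(1)] c by simp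
  moreover have "\<not> omega v a (qc_inftym G) (pfr [:-a, 1:]) (cst c)"
    using omega_pc(1)[OF qc_inftym_Q _ c(1), of "[:-a,1:]" a] ov_inf_a inf_above' by simp
  ultimately show False using e by simp
qed

end

context VQ begin

lemma case_unbounded: assumes h: "\<forall>c. c \<noteq> 0 \<longrightarrow> \<not> Q (X b) (cst c)"
  shows "Q = omega v b (qc_inftym G)"
proof -
  have hyp: "\<forall>r. r \<noteq> b \<longrightarrow> (Q (X b) (cst (r - b)) \<and> Qeq (X r) (X b)) \<or>
      (Q (cst (r - b)) (X b) \<and> Qeq (X r) (cst (r - b)))"
  proof (intro allI impI disjI2 conjI)
    fix r assume rb: "r \<noteq> b"
    then have n1: "r - b \<noteq> 0" "b - r \<noteq> 0" by auto
    show "Q (cst (r - b)) (X b)" using h n1 Qtot by blast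
    have "Qlt (cst (b - r)) (X b)" unfolding Qlt_def using h n1 by blast
    then have "Qeq (X r) (cst (b - r))" using Qstrict' X_split[of r b] by simp
    then show "Qeq (X r) (cst (r - b))" using cst_sym[of b r] Qeq_trans Qeq_sym by blast
  qed
  have "Q = omega v b (dQ b)" using detD[OF hyp] .
  moreover have "dQ b = qc_inftym G"
  proof -
    have 1: "{v c |c. c \<noteq> 0 \<and> Q (X b) (cst c)} = {}" using h by auto
    have 2: "{v c |c. c \<noteq> 0 \<and> Q (cst c) (X b)} = G"
    proof
      show "{v c |c. c \<noteq> 0 \<and> Q (cst c) (X b)} \<subseteq> G" using G_v by auto
      show "G \<subseteq> {v c |c. c \<noteq> 0 \<and> Q (cst c) (X b)}"
      proof
        fix \<gamma> assume "\<gamma> \<in> G"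
        then obtain c where c: "c \<noteq> 0" "\<gamma> = v c" using G_E by blast
        then have "Q (cst c) (X b)" using h Qtot[of "X b" "cst c"] by blast
        then show "\<gamma> \<in> {v c |c. c \<noteq> 0 \<and> Q (cst c) (X b)}" using c by blast
      qed
    qed
    show ?thesis unfolding dQ_def 1 2 by (simp add: qc_inftym_def)
  qed
  ultimately show ?thesis by simp
qed

lemma case_attained: assumes m: "\<forall>r. Q (X r) (X b)"
  shows "Q = omega v b (dQ b)"
proof -
  have hyp: "\<forall>r. r \<noteq> b \<longrightarrow> (Q (X b) (cst (r - b)) \<and> Qeq (X r) (X b)) \<or>
      (Q (cst (r - b)) (X b) \<and> Qeq (X r) (cst (r - b)))"
  proof (intro allI impI)
    fix r assume rb: "r \<noteq> b"
    have xs: "X r = X b + cst (b - r)" by (rule X_split)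
    show "(Q (X b) (cst (r - b)) \<and> Qeq (X r) (X b)) \<or> (Q (cst (r - b)) (X b) \<and> Qeq (X r) (cst (r - b)))"
    proof (cases "Q (X b) (cst (r - b))")
      case True
      have "Q (X b) (cst (b - r))" using True cst_sym Qtrans unfolding Qeq_def by blast
      then have "Q (X b) (X r)" unfolding xs using Qadd Qrefl by blast
      then show ?thesis using True m unfolding Qeq_def by blast
    next
      case False
      then have lt: "Qlt (cst (r - b)) (X b)" unfolding Qlt_def .
      then have "Qlt (cst (b - r)) (X b)" using cst_sym[of r b] Qlt_trans2 unfolding Qeq_def by blast
      then have "Qeq (X r) (cst (b - r))" using Qstrict' xs by simp
      then have "Qeq (X r) (cst (r - b))" using cst_sym[of b r] Qeq_trans by blast
      then show ?thesis using Qlt_imp[OF lt] by blast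
    qed
  qed
  show ?thesis using detD[OF hyp] .
qed

end

context VF begin

lemma maximal_class: assumes M: "is_maximal v P"
  shows "(\<exists>N. is_nest v N \<and> P = omegaB v N) \<or> (\<exists>a. P = omega v a (qc_inftym G))"
proof -
  have P: "is_val_class v P" and maxP: "\<And>Q. is_val_class v Q \<Longrightarrow> vle v P Q \<Longrightarrow> Q = P"
    using M unfolding is_maximal_def by blast+
  interpret p: VQ v P by (rule VQ_I[OF P])
  show ?thesis
  proof (cases "\<exists>b. \<forall>c. c \<noteq> 0 \<longrightarrow> \<not> P (X b) (cst c)")
    case True
    then obtain b where "\<forall>c. c \<noteq> 0 \<longrightarrow> \<not> P (X b) (cst c)" by blast
    then show ?thesis using p.case_unbounded by blast
  next
    case False
    then have bnd: "\<forall>b. \<exists>c. c \<noteq> 0 \<and> P (X b) (cst c)" by blast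
    have notatt: "\<forall>b. \<exists>b'. p.Qlt (X b) (X b')"
    proof (rule ccontr)
      assume "\<not> ?thesis"
      then obtain b where mb: "\<forall>r. P (X r) (X b)" unfolding p.Qlt_def by blast
      have e: "P = omega v b (p.dQ b)" using p.case_attained[OF mb] .
      have "vle v P (omega v b (qc_inftym G))" using omega_le_inf[OF p.dQ_Qcuts[of b], of b] e by simp
      then have W: "omega v b (qc_inftym G) = P" using maxP omega_val_class[OF qc_inftym_Q] by blast
      obtain c where c: "c \<noteq> 0" "P (X b) (cst c)" using bnd by blast
      have "\<not> omega v b (qc_inftym G) (X b) (cst c)"
        using omega_pc(1)[OF qc_inftym_Q _ c(1), of "[:-b,1:]" b] ov_inf_a inf_above' unfolding X_pfr by simp
      then show False using W c by simp
    qed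
    have exc: "\<exists>c. c \<noteq> 0 \<and> p.Qeq (X b) (cst c)" for b
    proof -
      obtain b' where lt: "p.Qlt (X b) (X b')" using notatt by blast
      have "p.Qeq (X b - X b') (X b)" using p.Qlt_diff[OF lt] .
      then have e: "p.Qeq (X b) (cst (b' - b))" using p.Qeq_sym X_diff by metis
      have "b' - b \<noteq> 0"
      proof
        assume "b' - b = 0" then have "b' = b" by simp
        then show False using lt p.Qrefl unfolding p.Qlt_def by simp
      qed
      then show ?thesis using e by blast
    qed
    define cc where "cc b = (SOME c. c \<noteq> 0 \<and> p.Qeq (X b) (cst c))" for b
    have cc: "cc b \<noteq> 0" "p.Qeq (X b) (cst (cc b))" for b
      using someI_ex[OF exc[of b]] unfolding cc_def by blast+
    define gm where "gm b = v (cc b)" for b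
    have gmG: "gm b \<in> G" for b unfolding gm_def using G_v cc by blast
    have PXc: "P (X b) (cst e) \<longleftrightarrow> gm b \<le> v e" if "e \<noteq> 0" for b e
      using p.Q_cong[OF cc(2) p.Qeq_refl] p.Qcst[OF cc(1) that] unfolding gm_def by blast
    have PcX: "P (cst e) (X b) \<longleftrightarrow> v e \<le> gm b" if "e \<noteq> 0" for b e
      using p.Q_cong[OF p.Qeq_refl cc(2)] p.Qcst[OF that cc(1)] unfolding gm_def by blast
    have PXX: "P (X b) (X b') \<longleftrightarrow> gm b \<le> gm b'" for b b'
      using p.Q_cong[OF cc(2) cc(2)] p.Qcst[OF cc(1) cc(1)] unfolding gm_def by blast
    have notatt': "\<forall>b. \<exists>b'. gm b < gm b'" using notatt PXX unfolding p.Qlt_def by (meson not_le)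
    define ctr where "ctr g = (SOME b. gm b = g)" for g
    define N where "N = (\<lambda>g. (ctr g, g)) ` range gm"
    have ctr: "gm (ctr g) = g" if "g \<in> range gm" for g
      using that someI_ex[of "\<lambda>b. gm b = g"] unfolding ctr_def by auto
    have ballN: "cball v (ctr g) g = {c. g \<le> gm c}" if g: "g \<in> range gm" for g
    proof (intro set_eqI iffI)
      let ?b = "ctr g"
      have gb: "gm ?b = g" using ctr[OF g] .
      fix c
      { assume "c \<in> cball v ?b g"
        then have "c = ?b \<or> g \<le> v (c - ?b)" unfolding cball_def by auto
        then show "c \<in> {c. g \<le> gm c}"
        proof
          assume "c = ?b" then show ?thesis using gb by simp
        next
          assume h: "g \<le> v (c - ?b)"
          show ?thesis
          proof (cases "c = ?b")
            case True then show ?thesis using gb by simp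
          next
            case False
            have "P (cst (cc ?b)) (X ?b)" using PcX[OF cc(1)] gb unfolding gm_def by simp
            moreover have "P (cst (cc ?b)) (cst (?b - c))"
              using p.Qcst cc(1) False h vsub[of c ?b] gb unfolding gm_def by simp
            ultimately have "P (cst (cc ?b)) (X c)" using p.Qadd X_split[of c ?b] by simp
            then show ?thesis using PcX[OF cc(1)] gb unfolding gm_def by simp
          qed
        qed }
      { assume "c \<in> {c. g \<le> gm c}"
        then have h: "g \<le> gm c" by simp
        show "c \<in> cball v ?b g"
        proof (cases "c = ?b")
          case True then show ?thesis unfolding cball_def by simp
        next
          case False
          have "P (cst (cc ?b)) (X c)" using PcX[OF cc(1)] gb h unfolding gm_def by simp
          moreover have "P (cst (cc ?b)) (X ?b)" using PcX[OF cc(1)] gb unfolding gm_def by simp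
          ultimately have "P (cst (cc ?b)) (X c - X ?b)" using p.Qsub by blast
          then have "P (cst (cc ?b)) (cst (?b - c))" using X_diff[of c ?b] by simp
          then have "g \<le> v (?b - c)" using p.Qcst cc(1) False gb unfolding gm_def by simp
          then show ?thesis unfolding cball_def using vsub[of c ?b] by simp
        qed }
    qed
    have nest: "is_nest v N"
      unfolding is_nest_def
    proof (intro conjI)
      show "N \<noteq> {}" unfolding N_def by simp
      show "\<forall>(a, \<gamma>)\<in>N. \<gamma> \<in> G" unfolding N_def using gmG by auto
      show "\<forall>p\<in>N. \<forall>q\<in>N. p \<noteq> q \<longrightarrow> cball v (fst p) (snd p) \<subset> cball v (fst q) (snd q) \<or>
          cball v (fst q) (snd q) \<subset> cball v (fst p) (snd p)"
      proof (intro ballI impI)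
        fix p q assume p: "p \<in> N" and q: "q \<in> N" and pq: "p \<noteq> q"
        obtain g where g: "g \<in> range gm" "p = (ctr g, g)" using p unfolding N_def by blast
        obtain h where h: "h \<in> range gm" "q = (ctr h, h)" using q unfolding N_def by blast
        have gh: "g \<noteq> h" using pq g h by auto
        have sub: "cball v (ctr h) h \<subset> cball v (ctr g) g" if "g < h" "g \<in> range gm" "h \<in> range gm" for g h
        proof -
          have "{c. h \<le> gm c} \<subset> {c. g \<le> gm c}"
          proof
            show "{c. h \<le> gm c} \<subseteq> {c. g \<le> gm c}" using that by auto
            have "ctr g \<in> {c. g \<le> gm c}" "ctr g \<notin> {c. h \<le> gm c}" using ctr[OF that(2)] that by auto
            then show "{c. h \<le> gm c} \<noteq> {c. g \<le> gm c}" by blast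
          qed
          then show ?thesis using ballN that by simp
        qed
        show "cball v (fst p) (snd p) \<subset> cball v (fst q) (snd q) \<or> cball v (fst q) (snd q) \<subset> cball v (fst p) (snd p)"
        proof (cases "g < h")
          case True then show ?thesis using sub[OF True g(1) h(1)] g h by simp
        next
          case False then have "h < g" using gh by simp
          then show ?thesis using sub[OF _ h(1) g(1)] g h by simp
        qed
      qed
      show "(\<Inter>p\<in>N. cball v (fst p) (snd p)) = {}"
      proof (rule ccontr)
        assume "(\<Inter>p\<in>N. cball v (fst p) (snd p)) \<noteq> {}"
        then obtain c where c: "\<forall>p\<in>N. c \<in> cball v (fst p) (snd p)" by blast
        obtain b' where "gm c < gm b'" using notatt' by blast
        moreover have "(ctr (gm b'), gm b') \<in> N" unfolding N_def by blast
        then have "c \<in> cball v (ctr (gm b')) (gm b')" using c by fastforce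
        then have "gm b' \<le> gm c" using ballN[of "gm b'"] by auto
        ultimately show False by simp
      qed
    qed
    have hyp: "\<exists>c. c \<noteq> 0 \<and> p.Qeq (X r) (cst c) \<and> wnest v N [:-r, 1:] = v c" for r
    proof -
      obtain b' where lt: "gm r < gm b'" using notatt' by blast
      let ?g = "gm b'"
      let ?b = "ctr ?g"
      have gb: "gm ?b = ?g" using ctr by blast
      have BN: "(?b, ?g) \<in> N" unfolding N_def by blast
      have rout: "r \<notin> ball (?b, ?g)" using ballN[of ?g] lt by auto
      have w: "wnest v N [:-r, 1:] = v (?b - r)" using wnest_lin_out[OF nest BN rout] by simp
      have "p.Qlt (X r) (X ?b)" unfolding p.Qlt_def using PXX gb lt by simp
      then have "p.Qeq (X r - X ?b) (X r)" using p.Qlt_diff by blast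
      then have "p.Qeq (cst (?b - r)) (cst (cc r))" using X_diff cc(2) p.Qeq_trans by metis
      moreover have "?b - r \<noteq> 0" using rout ball_center[of "(?b, ?g)"] by auto
      ultimately have "v (?b - r) = v (cc r)" using p.Qcst cc(1) unfolding p.Qeq_def by (meson antisym)
      then show ?thesis using cc w by metis
    qed
    have "P = omegaB v N" using p.gamma_det[OF nest hyp] .
    then show ?thesis using nest by blast
  qed
qed

end

theorem mainTheorem10:
  fixes v :: "'k::field \<Rightarrow> 'g::linordered_ab_group_add"
  assumes "alg_closed_field TYPE('k)"
    and "is_valuation v"
  shows
    "((\<forall>a b. omega v a (qc_minf (valgroup v)) = omega v b (qc_minf (valgroup v))) \<and>
     (\<forall>a P. is_val_class v P \<longrightarrow> vle v (omega v a (qc_minf (valgroup v))) P)) \<and>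
    ((\<forall>a. is_maximal v (omega v a (qc_inftym (valgroup v)))) \<and>
     {P. is_maximal v P} =
       {omegaB v N | N. is_nest v N} \<union> {omega v a (qc_inftym (valgroup v)) | a. True} \<and>
     {omegaB v N | N. is_nest v N} \<inter> {omega v a (qc_inftym (valgroup v)) | a. True} = {}) \<and>
    (\<forall>a. {Q. is_val_class v Q \<and> vle v (omega v a (qc_minf (valgroup v))) Q \<and>
              vle v Q (omega v a (qc_inftym (valgroup v)))}
         = {omega v a \<delta> | \<delta>. \<delta> \<in> Qcuts (valgroup v)})"
proof -
  interpret VF v by (rule VF.intro) (fact assms)+
  have max_eq: "{P. is_maximal v P} =
       {omegaB v N | N. is_nest v N} \<union> {omega v a (qc_inftym (valgroup v)) | a. True}"
  proof
    show "{P. is_maximal v P} \<subseteq> {omegaB v N | N. is_nest v N} \<union> {omega v a (qc_inftym (valgroup v)) | a. True}"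
      using maximal_class by blast
    show "{omegaB v N | N. is_nest v N} \<union> {omega v a (qc_inftym (valgroup v)) | a. True} \<subseteq> {P. is_maximal v P}"
      using omegaB_maximal inf_maximal by blast
  qed
  show ?thesis
    using minf_eq minf_least inf_maximal max_eq disjoint part_iii by blast
qed

end
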